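(* Let $P(t)=\sum_{i=0}^d\binom{t+i}{i+1}-\binom{t+i-e_i}{i+1}$ with integers $e_0\ge e_1\ge\dots\ge e_d>0$, and let $n\in\mathbb{N}$ with $n>d=\deg P$. (i) Set $e_i:=0$ for $d+1\le i\le n$ and $a_j:=e_j-e_{j+1}$ for $0\le j\le n-1$. Then $L^P_n=L(a_0,\dots,a_{n-1})=\langle x_0,x_1,\dots,x_{n-(d+2)},\ x_{n-(d+1)}^{a_d+1},\ x_{n-(d+1)}^{a_d}x_{n-d}^{a_{d-1}+1},\ \dots,\ x_{n-(d+1)}^{a_d}x_{n-d}^{a_{d-1}}\cdots x_{n-3}^{a_2}x_{n-2}^{a_1+1},\ x_{n-(d+1)}^{a_d}x_{n-d}^{a_{d-1}}\cdots x_{n-2}^{a_1}x_{n-1}^{a_0}\rangle$. (ii) If there is an integer $0\le\ell\le d-1$ with $a_j=0$ for all $j\le\ell$ and $a_{\ell+1}>0$, then the minimal monomial generators of $L^P_n$ are $m_1,\dots,m_{n-(\ell+1)}$, where $m_i:=x_{i-1}$ for $1\le i\le n-(d+1)$, $m_{n-d+k}:=\big(\prod_{j=0}^{k-1}x_{n-(d+1)+j}^{a_{d-j}}\big)x_{n-(d+1)+k}^{a_{d-k}+1}$ for $0\le k\le d-(\ell+2)$, and $m_{n-(\ell+1)}:=\prod_{j=0}^{d-(\ell+1)}x_{n-(d+1)+j}^{a_{d-j}}$. If $a_0\ne0$, then the minimal monomial generators are those listed in (i).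
   Context: $\Bbbk$ is an algebraically closed field and $\Bbbk[x_0,\dots,x_n]$ the standard graded polynomial ring. Binomial coefficients are polynomials: $\binom{t+a}{b}=\frac{(t+a)\cdots(t+a-b+1)}{b!}$ for $b\ge0$, $0$ for $b<0$. For $a_0,\dots,a_{n-1}\in\mathbb{N}$, $L(a_0,\dots,a_{n-1})$ is the monomial ideal generated by $x_0^{a_{n-1}+1},\ x_0^{a_{n-1}}x_1^{a_{n-2}+1},\ \dots,\ x_0^{a_{n-1}}\cdots x_{n-3}^{a_2}x_{n-2}^{a_1+1},\ x_0^{a_{n-1}}\cdots x_{n-2}^{a_1}x_{n-1}^{a_0}$. Lexicographic order: $x^u>x^v$ if the first nonzero coordinate of $u-v$ is positive. For a homogeneous ideal $I$ with Hilbert function $H$ (of the quotient), $L^H_n$ is the monomial ideal whose degree-$i$ piece is spanned by the $\dim_\Bbbk I_i$ lexicographically largest monomials of degree $i$; the lexicographic ideal $L^P_n$ is the saturation $\bigcup_{j\ge1}\{f: f\langle x_0,\dots,x_n\rangle^j\subseteq L^{H_I}_n\}$ for any homogeneous ideal $I$ whose Hilbert polynomial is $P$ (this is independent of the choice of $I$). *)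

theory Defs
  imports "HOL-Library.Poly_Mapping" "HOL-Computational_Algebra.Polynomial"
begin

text \<open>Monomials in the variables x_0, x_1, ... are exponent vectors nat =>0 nat;
  polynomials over a field 'k are finitely supported maps from monomials to 'k
  (with the convolution product of Poly_Mapping).\<close>

type_synonym mono = "nat \<Rightarrow>\<^sub>0 nat"
type_synonym 'k mpoly = "mono \<Rightarrow>\<^sub>0 'k"

definition in_vars :: "nat \<Rightarrow> mono \<Rightarrow> bool" where
  "in_vars n m \<longleftrightarrow> Poly_Mapping.keys m \<subseteq> {..n}"

definition mdeg :: "mono \<Rightarrow> nat" where
  "mdeg m = (\<Sum>i\<in>Poly_Mapping.keys m. Poly_Mapping.lookup m i)"

definition pring :: "nat \<Rightarrow> 'k::comm_ring_1 mpoly set" where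
  "pring n = {p. \<forall>m\<in>Poly_Mapping.keys p. in_vars n m}"

definition mon :: "mono \<Rightarrow> 'k::comm_ring_1 mpoly" where
  "mon m = Poly_Mapping.single m 1"

definition smul :: "'k::comm_ring_1 \<Rightarrow> 'k mpoly \<Rightarrow> 'k mpoly" where
  "smul c p = Poly_Mapping.single 0 c * p"

definition is_ideal :: "nat \<Rightarrow> 'k::comm_ring_1 mpoly set \<Rightarrow> bool" where
  "is_ideal n I \<longleftrightarrow> I \<subseteq> pring n \<and> 0 \<in> I \<and> (\<forall>p\<in>I. \<forall>q\<in>I. p + q \<in> I)
     \<and> (\<forall>p\<in>I. \<forall>r\<in>pring n. r * p \<in> I)"

definition hcomp :: "nat \<Rightarrow> 'k::comm_ring_1 mpoly \<Rightarrow> 'k mpoly" where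
  "hcomp i p = (\<Sum>m\<in>{m\<in>Poly_Mapping.keys p. mdeg m = i}. Poly_Mapping.single m (Poly_Mapping.lookup p m))"

definition homogeneous_ideal :: "nat \<Rightarrow> 'k::comm_ring_1 mpoly set \<Rightarrow> bool" where
  "homogeneous_ideal n I \<longleftrightarrow> is_ideal n I \<and> (\<forall>p\<in>I. \<forall>i. hcomp i p \<in> I)"

definition gen_ideal :: "nat \<Rightarrow> 'k::comm_ring_1 mpoly set \<Rightarrow> 'k mpoly set" where
  "gen_ideal n G = \<Inter>{J. is_ideal n J \<and> G \<subseteq> J}"

definition piece :: "'k::comm_ring_1 mpoly set \<Rightarrow> nat \<Rightarrow> 'k mpoly set" where
  "piece I i = {p\<in>I. \<forall>m\<in>Poly_Mapping.keys p. mdeg m = i}"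

definition lin_indep :: "'k::field mpoly set \<Rightarrow> bool" where
  "lin_indep S \<longleftrightarrow> (\<forall>c. (\<Sum>p\<in>S. smul (c p) p) = 0 \<longrightarrow> (\<forall>p\<in>S. c p = 0))"

definition dimI :: "'k::field mpoly set \<Rightarrow> nat \<Rightarrow> nat" where
  "dimI I i = Sup {card S | S. finite S \<and> S \<subseteq> piece I i \<and> lin_indep S}"

definition nmon :: "nat \<Rightarrow> nat \<Rightarrow> nat" where
  "nmon n i = card {m. in_vars n m \<and> mdeg m = i}"

definition hilb :: "nat \<Rightarrow> 'k::field mpoly set \<Rightarrow> nat \<Rightarrow> nat" where
  "hilb n I i = nmon n i - dimI I i"

definition has_hilb_poly :: "nat \<Rightarrow> 'k::field mpoly set \<Rightarrow> (nat \<Rightarrow> rat) \<Rightarrow> bool" where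
  "has_hilb_poly n I P \<longleftrightarrow> (\<exists>t0. \<forall>t\<ge>t0. of_nat (hilb n I t) = P t)"

definition hilbP :: "nat \<Rightarrow> (nat \<Rightarrow> int) \<Rightarrow> nat \<Rightarrow> rat" where
  "hilbP d e t = (\<Sum>i\<le>d. ((of_nat t + of_nat i) gchoose (i+1))
                     - ((of_nat t + of_nat i - of_int (e i)) gchoose (i+1)))"

definition lex_gt :: "mono \<Rightarrow> mono \<Rightarrow> bool" where
  "lex_gt u v \<longleftrightarrow> (\<exists>j. Poly_Mapping.lookup v j < Poly_Mapping.lookup u j \<and> (\<forall>i<j. Poly_Mapping.lookup u i = Poly_Mapping.lookup v i))"

definition toplex :: "nat \<Rightarrow> nat \<Rightarrow> nat \<Rightarrow> mono set" where
  "toplex n i k = {m. in_vars n m \<and> mdeg m = i \<and>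
      card {m'. in_vars n m' \<and> mdeg m' = i \<and> lex_gt m' m} < k}"

definition lexH :: "nat \<Rightarrow> 'k::field mpoly set \<Rightarrow> 'k mpoly set" where
  "lexH n I = {p\<in>pring n. \<forall>m\<in>Poly_Mapping.keys p. m \<in> toplex n (mdeg m) (dimI I (mdeg m))}"

text \<open>saturation w.r.t. <x_0..x_n>; <x_0..x_n>^j = polynomials with all monomials of degree >= j\<close>
definition saturation :: "nat \<Rightarrow> 'k::comm_ring_1 mpoly set \<Rightarrow> 'k mpoly set" where
  "saturation n L = {f\<in>pring n. \<exists>j\<ge>1. \<forall>g\<in>pring n. (\<forall>m\<in>Poly_Mapping.keys g. j \<le> mdeg m) \<longrightarrow> f * g \<in> L}"

text \<open>L^P_n (well defined: independent of the homogeneous ideal I with Hilbert polynomial P)\<close>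
definition lex_ideal :: "nat \<Rightarrow> (nat \<Rightarrow> rat) \<Rightarrow> 'k::field mpoly set" where
  "lex_ideal n P = (THE L. \<exists>I. homogeneous_ideal n I \<and> has_hilb_poly n I P
                             \<and> L = saturation n (lexH n I))"

definition Lgen :: "nat \<Rightarrow> (nat \<Rightarrow> nat) \<Rightarrow> nat \<Rightarrow> mono" where
  "Lgen n a k = (\<Sum>j<k. Poly_Mapping.single j (a (n - 1 - j)))
       + Poly_Mapping.single k (a (n - 1 - k) + (if k < n - 1 then 1 else 0))"

definition Lideal :: "nat \<Rightarrow> (nat \<Rightarrow> nat) \<Rightarrow> 'k::comm_ring_1 mpoly set" where
  "Lideal n a = gen_ideal n (mon ` {Lgen n a k | k. k < n})"

definition mdvd :: "mono \<Rightarrow> mono \<Rightarrow> bool" where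
  "mdvd u v \<longleftrightarrow> (\<forall>i. Poly_Mapping.lookup u i \<le> Poly_Mapping.lookup v i)"

definition mingens :: "nat \<Rightarrow> 'k::comm_ring_1 mpoly set \<Rightarrow> mono set" where
  "mingens n J = {m. in_vars n m \<and> mon m \<in> J \<and>
                     (\<forall>m'. in_vars n m' \<and> mon m' \<in> J \<and> mdvd m' m \<longrightarrow> m' = m)}"

definition Egen :: "nat \<Rightarrow> nat \<Rightarrow> (nat \<Rightarrow> nat) \<Rightarrow> nat \<Rightarrow> mono" where
  "Egen n d a k = (\<Sum>j<k. Poly_Mapping.single (n - (d+1) + j) (a (d - j)))
       + Poly_Mapping.single (n - (d+1) + k) (a (d - k) + (if k < d then 1 else 0))"

definition gens_i :: "nat \<Rightarrow> nat \<Rightarrow> (nat \<Rightarrow> nat) \<Rightarrow> mono set" where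
  "gens_i n d a = {Poly_Mapping.single i 1 | i. i + d + 2 \<le> n} \<union> {Egen n d a k | k. k \<le> d}"

definition gens_ii :: "nat \<Rightarrow> nat \<Rightarrow> (nat \<Rightarrow> nat) \<Rightarrow> nat \<Rightarrow> mono set" where
  "gens_ii n d a l = {Poly_Mapping.single i 1 | i. i + d + 2 \<le> n}
     \<union> {Egen n d a k | k. k + l + 2 \<le> d}
     \<union> {(\<Sum>j\<le>d - (l+1). Poly_Mapping.single (n - (d+1) + j) (a (d - j)))}"

end

theory Submission
  imports Defs "HOL-Library.FuncSet"
begin

abbreviation "lk \<equiv> Poly_Mapping.lookup"
abbreviation "ks \<equiv> Poly_Mapping.keys"
abbreviation "sg \<equiv> Poly_Mapping.single"


lemma lookup_minus_nat: "lk (f - g) k = lk f k - (lk g k::nat)"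
  by (simp add: minus_poly_mapping.rep_eq)

lemma mdeg_sum: "finite A \<Longrightarrow> ks m \<subseteq> A \<Longrightarrow> mdeg m = (\<Sum>i\<in>A. lk m i)"
  unfolding mdeg_def by (rule sum.mono_neutral_left) (auto simp: in_keys_iff)

lemma mdeg_add: "mdeg (u + v) = mdeg u + mdeg v"
proof -
  let ?A = "ks u \<union> ks v"
  have "mdeg (u+v) = (\<Sum>i\<in>?A. lk (u+v) i)"
    by (rule mdeg_sum) (use Poly_Mapping.keys_add[of u v] in auto)
  also have "\<dots> = (\<Sum>i\<in>?A. lk u i) + (\<Sum>i\<in>?A. lk v i)"
    by (simp add: lookup_add sum.distrib)
  also have "\<dots> = mdeg u + mdeg v"
    using mdeg_sum[of ?A u] mdeg_sum[of ?A v] by auto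
  finally show ?thesis .
qed

lemma mdeg_single[simp]: "mdeg (sg i b) = b"
  by (simp add: mdeg_def)

lemma mdeg_zero[simp]: "mdeg 0 = 0"
  by (simp add: mdeg_def)

lemma lookup_le_mdeg: "lk m i \<le> mdeg m"
proof (cases "i \<in> ks m")
  case True thus ?thesis unfolding mdeg_def by (intro member_le_sum) auto
next
  case False thus ?thesis by (simp add: in_keys_iff)
qed

lemma finite_bounded_monos:
  assumes "finite A"
  shows "finite {m::mono. ks m \<subseteq> A \<and> (\<forall>i. lk m i \<le> t)}"
proof -
  let ?S = "{m::mono. ks m \<subseteq> A \<and> (\<forall>i. lk m i \<le> t)}"
  have inj: "inj_on (\<lambda>m. restrict (lk m) A) ?S"
  proof (rule inj_onI)
    fix x y assume x: "x \<in> ?S" and y: "y \<in> ?S" and eq: "restrict (lk x) A = restrict (lk y) A"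
    show "x = y"
    proof (rule poly_mapping_eqI)
      fix i show "lk x i = lk y i"
      proof (cases "i \<in> A")
        case True then show ?thesis using fun_cong[OF eq, of i] by simp
      next
        case False
        hence "i \<notin> ks x" "i \<notin> ks y" using x y by auto
        then show ?thesis by (simp add: in_keys_iff)
      qed
    qed
  qed
  have sub: "(\<lambda>m. restrict (lk m) A) ` ?S \<subseteq> PiE A (\<lambda>_. {..t})" by auto
  have fin: "finite (PiE A (\<lambda>_. {..t}))" using assms by (simp add: finite_PiE)
  have "finite ((\<lambda>m. restrict (lk m) A) ` ?S)" by (rule finite_subset[OF sub fin])
  thus ?thesis using inj by (rule finite_imageD)
qed

definition MonS :: "nat \<Rightarrow> nat \<Rightarrow> nat \<Rightarrow> mono set" where
  "MonS s K t = {m. ks m \<subseteq> {s..<s+K} \<and> mdeg m = t}"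

lemma lk_le: "mdeg m = t \<Longrightarrow> lk m i \<le> t"
  using lookup_le_mdeg[of m i] by simp

lemma finite_MonS: "finite (MonS s K t)"
  by (rule finite_subset[OF _ finite_bounded_monos[of "{s..<s+K}" t]])
     (auto simp: MonS_def lk_le)

lemma finite_MonS_sub: "finite {m \<in> MonS s K t. P m}"
  by (rule finite_subset[OF _ finite_MonS]) auto

lemma decomp_s:
  fixes m :: mono and s :: nat
  defines "m' \<equiv> m - sg s (lk m s)"
  shows "m = m' + sg s (lk m s)" "lk m' s = 0" "mdeg m' = mdeg m - lk m s"
    "\<And>i. i \<noteq> s \<Longrightarrow> lk m' i = lk m i"
proof -
  show 1: "m = m' + sg s (lk m s)"
    by (rule poly_mapping_eqI) (simp add: m'_def lookup_add lookup_minus_nat lookup_single when_def)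
  show "lk m' s = 0" by (simp add: m'_def lookup_minus_nat)
  show "mdeg m' = mdeg m - lk m s"
    using arg_cong[OF 1, of mdeg] by (simp add: mdeg_add)
  show "\<And>i. i \<noteq> s \<Longrightarrow> lk m' i = lk m i"
    by (simp add: m'_def lookup_minus_nat lookup_single when_def)
qed

lemma MonS_fiber:
  assumes "b \<le> t"
  shows "{m \<in> MonS s (Suc K) t. lk m s = b} = (\<lambda>m'. m' + sg s b) ` MonS (Suc s) K (t - b)"
proof (intro set_eqI iffI)
  fix m assume "m \<in> {m \<in> MonS s (Suc K) t. lk m s = b}"
  hence m: "ks m \<subseteq> {s..<s + Suc K}" "mdeg m = t" "lk m s = b" by (auto simp: MonS_def)
  define m' where "m' = m - sg s (lk m s)"
  note D = decomp_s[where m=m and s=s, folded m'_def]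
  have "ks m' \<subseteq> {Suc s..<Suc s + K}"
  proof
    fix i assume i: "i \<in> ks m'"
    hence "i \<noteq> s" using D(2) by (auto simp: in_keys_iff)
    hence "i \<in> ks m" using i D(4)[of i] by (auto simp: in_keys_iff)
    thus "i \<in> {Suc s..<Suc s + K}" using m(1) \<open>i \<noteq> s\<close> by auto
  qed
  moreover have "mdeg m' = t - b" using D(3) m by simp
  ultimately show "m \<in> (\<lambda>m'. m' + sg s b) ` MonS (Suc s) K (t - b)"
    using D(1) m(3) by (auto simp: MonS_def)
next
  fix m assume "m \<in> (\<lambda>m'. m' + sg s b) ` MonS (Suc s) K (t - b)"
  then obtain m' where m': "ks m' \<subseteq> {Suc s..<Suc s + K}" "mdeg m' = t - b" and m: "m = m' + sg s b"
    by (auto simp: MonS_def)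
  have "ks m \<subseteq> {s..<s + Suc K}"
  proof
    fix i assume "i \<in> ks m"
    hence "i \<in> ks m' \<or> i = s" using Poly_Mapping.keys_add[of m' "sg s b"] m by (auto split: if_splits)
    thus "i \<in> {s..<s + Suc K}" using m'(1) by auto
  qed
  moreover have "mdeg m = t" using m m' assms by (simp add: mdeg_add)
  moreover have "lk m' s = 0" using m' by (auto simp: in_keys_iff)
  hence "lk m s = b" using m by (simp add: lookup_add)
  ultimately show "m \<in> {m \<in> MonS s (Suc K) t. lk m s = b}" by (auto simp: MonS_def)
qed

lemma inj_add_single: "inj_on (\<lambda>m'::mono. m' + sg s b) A"
  by (rule inj_onI) simp

lemma MonS_0: "MonS s 0 t = (if t = 0 then {0} else {})"
  by (auto simp: MonS_def)

lemma MonS_union: "MonS s (Suc K) t = (\<Union>b\<in>{..t}. {m \<in> MonS s (Suc K) t. lk m s = b})"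
  by (auto simp: MonS_def lk_le)

lemma card_MonS: "card (MonS s K t) = (t + K - 1) choose t"
proof (induction K arbitrary: s t)
  case 0 then show ?case by (cases t) (auto simp: MonS_0)
next
  case (Suc K)
  have "card (MonS s (Suc K) t) = (\<Sum>b\<in>{..t}. card {m \<in> MonS s (Suc K) t. lk m s = b})"
    by (subst MonS_union, rule card_UN_disjoint) (auto simp: finite_MonS_sub)
  also have "\<dots> = (\<Sum>b\<in>{..t}. card (MonS (Suc s) K (t - b)))"
    by (rule sum.cong, simp, subst MonS_fiber, simp, rule card_image, rule inj_add_single)
  also have "\<dots> = (\<Sum>b\<in>{..t}. (t - b + K - 1) choose (t - b))" using Suc by simp
  also have "\<dots> = (\<Sum>u\<in>{..t}. (u + K - 1) choose u)"
    by (rule sum.reindex_bij_witness[of _ "\<lambda>u. t - u" "\<lambda>b. t - b"]) auto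
  also have "\<dots> = (t + Suc K - 1) choose t"
  proof (cases K)
    case 0
    have "(\<Sum>u\<in>{..t}. (u + K - 1) choose u) = (\<Sum>u\<in>{0}. (u + K - 1) choose u)"
      by (rule sum.mono_neutral_right) (auto simp: 0)
    thus ?thesis by (simp add: 0)
  next
    case (Suc r)
    have "(\<Sum>u\<in>{..t}. (u + K - 1) choose u) = (\<Sum>u\<le>t. (r + u) choose u)"
      by (simp add: Suc add.commute)
    also have "\<dots> = Suc (r + t) choose t" by (rule sum_choose_lower)
    finally show ?thesis by (simp add: Suc add.commute)
  qed
  finally show ?case .
qed


definition gen :: "(nat \<Rightarrow> nat) \<Rightarrow> nat \<Rightarrow> nat \<Rightarrow> nat \<Rightarrow> mono" where
  "gen a D s k = (\<Sum>j<k. sg (s+j) (a (D-j))) + sg (s+k) (a (D-k) + (if k < D then 1 else 0))"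

lemma sum_shift_delta:
  "(\<Sum>j<k. (f j when s + j = (i::nat))) = (if s \<le> i \<and> i < s + k then f (i - s) else (0::'b::comm_monoid_add))"
proof (cases "s \<le> i")
  case True
  have "(\<Sum>j<k. (f j when s + j = i)) = (\<Sum>j<k. if j = i - s then f j else 0)"
    by (rule sum.cong) (use True in \<open>auto simp: when_def\<close>)
  also have "\<dots> = (if i - s \<in> {..<k} then f (i - s) else 0)" by (rule sum.delta) simp
  finally show ?thesis using True by auto
next
  case False
  hence "(\<Sum>j<k. (f j when s + j = i)) = (\<Sum>j<k. 0)" by (intro sum.cong) (auto simp: when_def)
  thus ?thesis using False by simp
qed

lemma lookup_gen: "lk (gen a D s k) i = (if s \<le> i \<and> i < s + k then a (D - (i - s))
    else if i = s + k then a (D-k) + (if k<D then 1 else 0) else 0)"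
  unfolding gen_def lookup_add lookup_sum lookup_single sum_shift_delta by (auto simp: when_def)

lemma lookup_gen_Suc_s: "lk (gen a (Suc D) s (Suc k)) s = a (Suc D)"
  by (simp add: lookup_gen)

lemma lookup_gen_Suc_other: "i \<noteq> s \<Longrightarrow> lk (gen a (Suc D) s (Suc k)) i = lk (gen a D (Suc s) k) i"
  by (auto simp: lookup_gen Suc_diff_Suc)

lemma lookup_gen_s0: "lk (gen a D (Suc s) k) s = 0"
  by (simp add: lookup_gen)

lemma gen_0: "gen a D s 0 = sg s (a D + (if 0 < D then 1 else 0))"
  by (simp add: gen_def)

lemma mdvd_single_iff: "lk m' s = 0 \<Longrightarrow> mdvd (sg s c) (m' + sg s b) \<longleftrightarrow> c \<le> b"
  by (auto simp: mdvd_def lookup_add lookup_single when_def)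

lemma gen_dvd_Suc:
  assumes "lk m' s = 0"
  shows "mdvd (gen a (Suc D) s k) (m' + sg s b) \<longleftrightarrow>
     (if k = 0 then a (Suc D) + 1 \<le> b else a (Suc D) \<le> b \<and> mdvd (gen a D (Suc s) (k - 1)) m')"
proof (cases k)
  case 0 thus ?thesis using mdvd_single_iff[OF assms] by (simp add: gen_0)
next
  case (Suc k')
  have "mdvd (gen a (Suc D) s k) (m' + sg s b) \<longleftrightarrow>
     (\<forall>i. lk (gen a (Suc D) s (Suc k')) i \<le> lk m' i + lk (sg s b) i)"
    by (simp add: mdvd_def lookup_add Suc)
  also have "\<dots> \<longleftrightarrow> a (Suc D) \<le> b \<and> (\<forall>i. i \<noteq> s \<longrightarrow> lk (gen a D (Suc s) k') i \<le> lk m' i)"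
  proof
    assume H: "\<forall>i. lk (gen a (Suc D) s (Suc k')) i \<le> lk m' i + lk (sg s b) i"
    show "a (Suc D) \<le> b \<and> (\<forall>i. i \<noteq> s \<longrightarrow> lk (gen a D (Suc s) k') i \<le> lk m' i)"
    proof
      show "a (Suc D) \<le> b" using H[rule_format, of s] assms by (simp add: lookup_gen_Suc_s)
      show "\<forall>i. i \<noteq> s \<longrightarrow> lk (gen a D (Suc s) k') i \<le> lk m' i"
      proof (intro allI impI)
        fix i assume "i \<noteq> s"
        then show "lk (gen a D (Suc s) k') i \<le> lk m' i"
          using H[rule_format, of i] by (simp add: lookup_gen_Suc_other lookup_single when_def)
      qed
    qed
  next
    assume H: "a (Suc D) \<le> b \<and> (\<forall>i. i \<noteq> s \<longrightarrow> lk (gen a D (Suc s) k') i \<le> lk m' i)"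
    show "\<forall>i. lk (gen a (Suc D) s (Suc k')) i \<le> lk m' i + lk (sg s b) i"
    proof
      fix i show "lk (gen a (Suc D) s (Suc k')) i \<le> lk m' i + lk (sg s b) i"
        using H assms by (cases "i = s") (auto simp: lookup_gen_Suc_s lookup_gen_Suc_other lookup_single when_def)
    qed
  qed
  also have "\<dots> \<longleftrightarrow> a (Suc D) \<le> b \<and> mdvd (gen a D (Suc s) k') m'"
  proof -
    have "(\<forall>i. i \<noteq> s \<longrightarrow> lk (gen a D (Suc s) k') i \<le> lk m' i) \<longleftrightarrow> mdvd (gen a D (Suc s) k') m'"
      unfolding mdvd_def using lookup_gen_s0[of a D s k'] by (metis le0)
    thus ?thesis by simp
  qed
  finally show ?thesis using Suc by simp
qed

lemma gen_dvd_0: "lk m' s = 0 \<Longrightarrow> mdvd (gen a 0 s 0) (m' + sg s b) \<longleftrightarrow> a 0 \<le> b"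
  using mdvd_single_iff[of m' s "a 0" b] by (simp add: gen_0)

definition Std :: "(nat \<Rightarrow> nat) \<Rightarrow> nat \<Rightarrow> nat \<Rightarrow> nat \<Rightarrow> mono set" where
  "Std a D s t = {m \<in> MonS s (D+2) t. \<forall>k\<le>D. \<not> mdvd (gen a D s k) m}"

lemma finite_Std: "finite (Std a D s t)"
  by (rule finite_subset[OF _ finite_MonS]) (auto simp: Std_def)

lemma MonS_lookup0: "m' \<in> MonS (Suc s) K u \<Longrightarrow> lk m' s = 0"
  by (auto simp: MonS_def in_keys_iff)

lemma MonS_decomp:
  assumes "m \<in> MonS s (Suc K) t"
  obtains m' where "m' \<in> MonS (Suc s) K (t - lk m s)" "m = m' + sg s (lk m s)" "lk m s \<le> t"
proof -
  have le: "lk m s \<le> t" using assms lookup_le_mdeg[of m s] by (auto simp: MonS_def)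
  have "m \<in> {m' \<in> MonS s (Suc K) t. lk m' s = lk m s}" using assms by auto
  then show ?thesis using MonS_fiber[OF le, of s K] that le by auto
qed

lemma MonS_compose: "m' \<in> MonS (Suc s) K (t - b) \<Longrightarrow> b \<le> t \<Longrightarrow> m' + sg s b \<in> MonS s (Suc K) t"
  using MonS_fiber[of b t s K] by auto

lemma Std_Suc:
  assumes At: "a (Suc D) \<le> t"
  shows "Std a (Suc D) s t = (\<Union>b\<in>{..<a (Suc D)}. (\<lambda>m'. m' + sg s b) ` MonS (Suc s) (Suc (Suc D)) (t-b))
       \<union> (\<lambda>m'. m' + sg s (a (Suc D))) ` Std a D (Suc s) (t - a (Suc D))"
    (is "?L = ?R1 \<union> ?R2")
proof (intro set_eqI iffI)
  fix m assume "m \<in> ?L"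
  hence mM: "m \<in> MonS s (Suc (Suc (Suc D))) t" and nd: "\<forall>k\<le>Suc D. \<not> mdvd (gen a (Suc D) s k) m"
    by (auto simp: Std_def)
  obtain m' where m': "m' \<in> MonS (Suc s) (Suc (Suc D)) (t - lk m s)" "m = m' + sg s (lk m s)" "lk m s \<le> t"
    using MonS_decomp[OF mM] by blast
  have z: "lk m' s = 0" using MonS_lookup0[OF m'(1)] .
  let ?b = "lk m s"
  have "\<not> a (Suc D) + 1 \<le> ?b" using nd[rule_format, of 0] gen_dvd_Suc[OF z, of a D 0 ?b] m'(2) by auto
  hence "?b < a (Suc D) \<or> ?b = a (Suc D)" by auto
  thus "m \<in> ?R1 \<union> ?R2"
  proof
    assume b: "?b < a (Suc D)"
    have "m \<in> (\<lambda>m'. m' + sg s ?b) ` MonS (Suc s) (Suc (Suc D)) (t - ?b)"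
      using m'(1,2) by (rule rev_image_eqI)
    hence "m \<in> ?R1" using b by (intro UN_I[of ?b]) simp_all
    thus ?thesis by (rule UnI1)
  next
    assume b: "?b = a (Suc D)"
    have "\<forall>k\<le>D. \<not> mdvd (gen a D (Suc s) k) m'"
    proof (intro allI impI)
      fix k assume "k \<le> D"
      thus "\<not> mdvd (gen a D (Suc s) k) m'"
        using nd[rule_format, of "Suc k"] gen_dvd_Suc[OF z, of a D "Suc k" ?b] m'(2) b by auto
    qed
    moreover have "m' \<in> MonS (Suc s) (D+2) (t - a (Suc D))" using m'(1) b by simp
    ultimately have "m' \<in> Std a D (Suc s) (t - a (Suc D))" by (simp add: Std_def)
    hence "m \<in> ?R2" using m'(2) b by (intro rev_image_eqI) simp_all
    thus ?thesis by (rule UnI2)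
  qed
next
  fix m assume "m \<in> ?R1 \<union> ?R2"
  thus "m \<in> ?L"
  proof
    assume "m \<in> ?R1"
    then obtain b m' where b: "b < a (Suc D)" and m': "m' \<in> MonS (Suc s) (Suc (Suc D)) (t-b)" and m: "m = m' + sg s b"
      by blast
    have z: "lk m' s = 0" using MonS_lookup0[OF m'] .
    have "m \<in> MonS s (Suc (Suc (Suc D))) t" using MonS_compose[OF m'] b At m by simp
    moreover have "\<forall>k\<le>Suc D. \<not> mdvd (gen a (Suc D) s k) m"
      using gen_dvd_Suc[OF z, of a D _ b] b m by auto
    ultimately show "m \<in> ?L" by (simp add: Std_def)
  next
    assume "m \<in> ?R2"
    then obtain m' where m': "m' \<in> Std a D (Suc s) (t - a (Suc D))" and m: "m = m' + sg s (a (Suc D))"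
      by blast
    have mM: "m' \<in> MonS (Suc s) (Suc (Suc D)) (t - a (Suc D))" and nd: "\<forall>k\<le>D. \<not> mdvd (gen a D (Suc s) k) m'"
      using m' by (auto simp: Std_def)
    have z: "lk m' s = 0" using MonS_lookup0[OF mM] .
    have "m \<in> MonS s (Suc (Suc (Suc D))) t" using MonS_compose[OF mM At] m by simp
    moreover have "\<forall>k\<le>Suc D. \<not> mdvd (gen a (Suc D) s k) m"
    proof (intro allI impI)
      fix k assume k: "k \<le> Suc D"
      show "\<not> mdvd (gen a (Suc D) s k) m"
      proof (cases k)
        case 0 thus ?thesis using gen_dvd_Suc[OF z, of a D k "a (Suc D)"] m by simp
      next
        case (Suc k') thus ?thesis using gen_dvd_Suc[OF z, of a D k "a (Suc D)"] m nd k by simp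
      qed
    qed
    ultimately show "m \<in> ?L" by (simp add: Std_def)
  qed
qed

lemma Std_0:
  assumes "a 0 \<le> t"
  shows "Std a 0 s t = (\<Union>b\<in>{..<a 0}. (\<lambda>m'. m' + sg s b) ` MonS (Suc s) 1 (t-b))"
proof (intro set_eqI iffI)
  fix m assume "m \<in> Std a 0 s t"
  hence mM: "m \<in> MonS s (Suc 1) t" and nd: "\<not> mdvd (gen a 0 s 0) m" by (auto simp: Std_def)
  obtain m' where m': "m' \<in> MonS (Suc s) 1 (t - lk m s)" "m = m' + sg s (lk m s)" "lk m s \<le> t"
    using MonS_decomp[OF mM] by blast
  have "lk m s < a 0" using nd gen_dvd_0[OF MonS_lookup0[OF m'(1)], of a "lk m s"] m'(2) by auto
  moreover have "m \<in> (\<lambda>m'. m' + sg s (lk m s)) ` MonS (Suc s) 1 (t - lk m s)"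
    using m'(1,2) by (rule rev_image_eqI)
  ultimately show "m \<in> (\<Union>b\<in>{..<a 0}. (\<lambda>m'. m' + sg s b) ` MonS (Suc s) 1 (t-b))"
    by (intro UN_I[of "lk m s"]) simp_all
next
  fix m assume "m \<in> (\<Union>b\<in>{..<a 0}. (\<lambda>m'. m' + sg s b) ` MonS (Suc s) 1 (t-b))"
  then obtain b m' where b: "b < a 0" and m': "m' \<in> MonS (Suc s) 1 (t-b)" and m: "m = m' + sg s b" by blast
  have "m \<in> MonS s (Suc 1) t" using MonS_compose[OF m'] b assms m by simp
  moreover have "\<not> mdvd (gen a 0 s 0) m" using gen_dvd_0[OF MonS_lookup0[OF m'], of a b] b m by simp
  ultimately show "m \<in> Std a 0 s t" by (simp add: Std_def)
qed

lemma card_image_add_single: "card ((\<lambda>m'::mono. m' + sg s b) ` A) = card A"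
  by (rule card_image[OF inj_add_single])

lemma disj_images:
  assumes "\<And>m'. m' \<in> A \<Longrightarrow> lk m' s = 0" "\<And>m'. m' \<in> B \<Longrightarrow> lk m' s = 0" "b \<noteq> c"
  shows "(\<lambda>m'::mono. m' + sg s b) ` A \<inter> (\<lambda>m'. m' + sg s c) ` B = {}"
proof -
  { fix x y assume "x \<in> A" "y \<in> B" "x + sg s b = y + sg s c"
    hence "lk (x + sg s b) s = lk (y + sg s c) s" by simp
    hence False using assms \<open>x \<in> A\<close> \<open>y \<in> B\<close> by (simp add: lookup_add) }
  thus ?thesis by blast
qed

lemma disj_images_MonS: "b \<noteq> c \<Longrightarrow> (\<lambda>m'::mono. m' + sg s b) ` MonS (Suc s) K u \<inter> (\<lambda>m'. m' + sg s c) ` MonS (Suc s) K v = {}"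
  by (rule disj_images) (auto intro: MonS_lookup0)

lemma card_Std_0: "a 0 \<le> t \<Longrightarrow> card (Std a 0 s t) = a 0"
proof -
  assume A: "a 0 \<le> t"
  have "card (Std a 0 s t) = (\<Sum>b\<in>{..<a 0}. card ((\<lambda>m'. m' + sg s b) ` MonS (Suc s) 1 (t-b)))"
    by (subst Std_0[of a t s, OF A], rule card_UN_disjoint)
       (simp_all add: finite_MonS disj_images_MonS)
  also have "\<dots> = (\<Sum>b\<in>{..<a 0}. 1)" by (simp add: card_image_add_single card_MonS)
  finally show ?thesis by simp
qed

lemma card_Std_Suc: "a (Suc D) \<le> t \<Longrightarrow> card (Std a (Suc D) s t) =
   (\<Sum>b<a (Suc D). (t - b + Suc D) choose (t - b)) + card (Std a D (Suc s) (t - a (Suc D)))"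
proof -
  assume A: "a (Suc D) \<le> t"
  let ?R1 = "(\<Union>b\<in>{..<a (Suc D)}. (\<lambda>m'. m' + sg s b) ` MonS (Suc s) (Suc (Suc D)) (t-b))"
  let ?R2 = "(\<lambda>m'. m' + sg s (a (Suc D))) ` Std a D (Suc s) (t - a (Suc D))"
  have c1: "card ?R1 = (\<Sum>b<a (Suc D). (t - b + Suc D) choose (t - b))"
  proof -
    have "card ?R1 = (\<Sum>b\<in>{..<a (Suc D)}. card ((\<lambda>m'. m' + sg s b) ` MonS (Suc s) (Suc (Suc D)) (t-b)))"
      by (rule card_UN_disjoint) (simp_all add: finite_MonS disj_images_MonS)
    thus ?thesis by (simp add: card_image_add_single card_MonS)
  qed
  have "?R1 \<inter> ?R2 = {}"
  proof -
    { fix b assume "b < a (Suc D)"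
      have "(\<lambda>m'. m' + sg s b) ` MonS (Suc s) (Suc (Suc D)) (t-b) \<inter> ?R2 = {}"
        by (rule disj_images) (use \<open>b < a (Suc D)\<close> in \<open>auto simp: Std_def intro: MonS_lookup0\<close>) }
    thus ?thesis by blast
  qed
  moreover have "finite ?R1" by (auto simp: finite_MonS)
  moreover have "finite ?R2" by (simp add: finite_Std)
  ultimately have "card (?R1 \<union> ?R2) = card ?R1 + card ?R2" by (rule card_Un_disjoint[rotated 2])
  thus ?thesis using c1 Std_Suc[of a D t s, OF A] by (simp add: card_image_add_single)
qed


lemma pascal_rat: "((y::rat) + 1) gchoose (Suc k) = (y gchoose k) + (y gchoose (Suc k))"
  by (rule gbinomial_Suc_Suc)

lemma telesc:
  assumes "A \<le> t"
  shows "(\<Sum>b<A. of_nat ((t - b + D) choose (t - b)) :: rat)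
       = (of_nat t + of_nat D + 1 gchoose (Suc D)) - (of_nat t - of_nat A + of_nat D + 1 gchoose (Suc D))"
  using assms
proof (induction A)
  case 0 then show ?case by simp
next
  case (Suc A)
  have le: "A \<le> t" "A < t" using Suc.prems by auto
  have "of_nat ((t - A + D) choose (t - A)) = (of_nat (t - A + D) gchoose D :: rat)"
    by (subst binomial_symmetric) (auto simp: binomial_gbinomial)
  also have "\<dots> = (of_nat t - of_nat A + of_nat D) gchoose D"
    using le by (simp add: of_nat_diff algebra_simps)
  finally have tm: "of_nat ((t - A + D) choose (t - A)) = ((of_nat t - of_nat A + of_nat D) gchoose D :: rat)" .
  have p: "((of_nat t - of_nat A + of_nat D :: rat) + 1) gchoose (Suc D) =
      ((of_nat t - of_nat A + of_nat D) gchoose D) + ((of_nat t - of_nat A + of_nat D) gchoose (Suc D))"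
    by (rule pascal_rat)
  have e: "(of_nat t - of_nat (Suc A) + of_nat D + 1 :: rat) = of_nat t - of_nat A + of_nat D" by simp
  have IH: "(\<Sum>b<A. of_nat ((t - b + D) choose (t - b)) :: rat)
       = (of_nat t + of_nat D + 1 gchoose (Suc D)) - (of_nat t - of_nat A + of_nat D + 1 gchoose (Suc D))"
    by (rule Suc.IH[OF le(1)])
  show ?case unfolding sum.lessThan_Suc IH tm e using p by linarith
qed

lemma hockey:
  "(\<Sum>i\<le>D. ((y::rat) + of_nat i gchoose (i+1))) = (y + of_nat D + 1 gchoose (D+1)) - 1"
proof (induction D)
  case 0 then show ?case by simp
next
  case (Suc D)
  have p: "((y + of_nat D + 1) + 1) gchoose (Suc (Suc D)) =
      ((y + of_nat D + 1) gchoose (Suc D)) + ((y + of_nat D + 1) gchoose (Suc (Suc D)))"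
    by (rule pascal_rat)
  have a1: "y + of_nat (Suc D) = y + of_nat D + 1" by simp
  have a2: "Suc D + 1 = Suc (Suc D)" "D + 1 = Suc D" by simp_all
  show ?case unfolding sum.atMost_Suc Suc.IH a1 a2 using p by linarith
qed

lemma count_formula:
  "(\<Sum>j\<le>D. a j) \<le> t \<Longrightarrow> of_nat (card (Std a D s t)) =
     (\<Sum>i\<le>D. (of_nat t + of_nat i gchoose (i+1))
        - (of_nat t + of_nat i - of_nat (\<Sum>j\<in>{i..D}. a j) gchoose (i+1)) :: rat)"
proof (induction D arbitrary: s t)
  case 0
  hence "a 0 \<le> t" by simp
  thus ?case by (simp add: card_Std_0)
next
  case (Suc D)
  let ?A = "a (Suc D)"
  let ?x = "of_nat t :: rat"
  have At: "?A \<le> t" using Suc.prems by simp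
  have le': "(\<Sum>j\<le>D. a j) \<le> t - ?A" using Suc.prems by simp
  have E: "\<And>i. i \<le> D \<Longrightarrow> (\<Sum>j\<in>{i..Suc D}. a j) = (\<Sum>j\<in>{i..D}. a j) + ?A"
    by (simp add: sum.cl_ivl_Suc)
  define x' :: rat where "x' = of_nat (t - ?A)"
  have x': "x' = ?x - of_nat ?A" using At by (simp add: x'_def of_nat_diff)
  define S where "S = (\<Sum>i\<le>D. (x' + of_nat i - of_nat (\<Sum>j\<in>{i..D}. a j) gchoose (i+1)))"
  have IH: "of_nat (card (Std a D (Suc s) (t - ?A))) = (\<Sum>i\<le>D. (x' + of_nat i gchoose (i+1))) - S"
    using Suc.IH[OF le'] unfolding S_def x'_def by (simp add: sum_subtractf)
  have hx': "(\<Sum>i\<le>D. (x' + of_nat i gchoose (i+1))) = (x' + of_nat D + 1 gchoose (D+1)) - 1"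
    by (rule hockey)
  have hx: "(\<Sum>i\<le>D. (?x + of_nat i gchoose (i+1))) = (?x + of_nat D + 1 gchoose (D+1)) - 1"
    by (rule hockey)
  have SE: "(\<Sum>i\<le>D. (?x + of_nat i - of_nat (\<Sum>j\<in>{i..Suc D}. a j) gchoose (i+1))) = S"
    unfolding S_def
  proof (rule sum.cong)
    fix i assume "i \<in> {..D}"
    hence "i \<le> D" by simp
    have h1: "rat_of_nat (\<Sum>j\<in>{i..Suc D}. a j) = rat_of_nat (\<Sum>j\<in>{i..D}. a j) + of_nat ?A"
      by (subst E[OF \<open>i \<le> D\<close>]) (rule of_nat_add)
    have eqA: "?x + of_nat i - of_nat (\<Sum>j\<in>{i..Suc D}. a j) = x' + of_nat i - of_nat (\<Sum>j\<in>{i..D}. a j)"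
      unfolding h1 x' by linarith
    show "(?x + of_nat i - of_nat (\<Sum>j\<in>{i..Suc D}. a j) gchoose (i+1)) = (x' + of_nat i - of_nat (\<Sum>j\<in>{i..D}. a j) gchoose (i+1))"
      by (simp only: eqA)
  qed simp
  have T: "(\<Sum>b<?A. of_nat ((t - b + Suc D) choose (t - b)) :: rat)
       = (?x + of_nat (Suc D) + 1 gchoose (Suc (Suc D))) - (?x - of_nat ?A + of_nat (Suc D) + 1 gchoose (Suc (Suc D)))"
    by (rule telesc[OF At])
  define y0 where "y0 = ?x + of_nat D + 1"
  define y1 where "y1 = x' + of_nat D + 1"
  have T': "(\<Sum>b<?A. of_nat ((t - b + Suc D) choose (t - b)) :: rat)
       = ((y0 + 1) gchoose (Suc (Suc D))) - ((y1 + 1) gchoose (Suc (Suc D)))"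
    using T by (simp add: y0_def y1_def x' algebra_simps)
  have p0: "(y0 + 1) gchoose (Suc (Suc D)) = (y0 gchoose Suc D) + (y0 gchoose Suc (Suc D))" by (rule pascal_rat)
  have p1: "(y1 + 1) gchoose (Suc (Suc D)) = (y1 gchoose Suc D) + (y1 gchoose Suc (Suc D))" by (rule pascal_rat)
  have last1: "?x + of_nat (Suc D) = y0" by (simp add: y0_def)
  have last2: "?x + of_nat (Suc D) - of_nat (\<Sum>j\<in>{Suc D..Suc D}. a j) = y1"
    by (simp add: y1_def x' algebra_simps)
  have hx2: "(\<Sum>i\<le>D. (x' + of_nat i gchoose (i+1))) = (y1 gchoose (Suc D)) - 1"
    using hx' by (simp add: y1_def)
  have hx3: "(\<Sum>i\<le>D. (?x + of_nat i gchoose (i+1))) = (y0 gchoose (Suc D)) - 1"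
    using hx by (simp add: y0_def)
  have "of_nat (card (Std a (Suc D) s t)) =
      (\<Sum>b<?A. of_nat ((t - b + Suc D) choose (t - b)) :: rat) + of_nat (card (Std a D (Suc s) (t - ?A)))"
    by (simp add: card_Std_Suc[of a D t s, OF At])
  also have "\<dots> = (y0 gchoose Suc (Suc D)) - (y1 gchoose Suc (Suc D)) + (y0 gchoose Suc D) - 1 - S"
    using T' p0 p1 IH hx2 by simp
  also have "\<dots> = (\<Sum>i\<le>Suc D. (?x + of_nat i gchoose (i+1))
        - (?x + of_nat i - of_nat (\<Sum>j\<in>{i..Suc D}. a j) gchoose (i+1)))"
  proof -
    have f1: "(?x + of_nat (Suc D) gchoose (Suc D + 1)) = y0 gchoose Suc (Suc D)"
      by (simp only: last1 Suc_eq_plus1[symmetric])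
    have g1: "(?x + of_nat (Suc D) - of_nat (\<Sum>j\<in>{Suc D..Suc D}. a j) gchoose (Suc D + 1)) = y1 gchoose Suc (Suc D)"
      by (simp only: last2 Suc_eq_plus1[symmetric])
    have "(\<Sum>i\<le>Suc D. (?x + of_nat i gchoose (i+1))
        - (?x + of_nat i - of_nat (\<Sum>j\<in>{i..Suc D}. a j) gchoose (i+1)))
       = ((\<Sum>i\<le>D. (?x + of_nat i gchoose (i+1))) + (y0 gchoose Suc (Suc D)))
         - ((\<Sum>i\<le>D. (?x + of_nat i - of_nat (\<Sum>j\<in>{i..Suc D}. a j) gchoose (i+1))) + (y1 gchoose Suc (Suc D)))"
      by (simp only: sum_subtractf sum.atMost_Suc f1 g1)
    thus ?thesis unfolding hx3 SE by linarith
  qed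
  finally show ?case .
qed



lemma in_vars_add: "in_vars n u \<Longrightarrow> in_vars n v \<Longrightarrow> in_vars n (u + v)"
  unfolding in_vars_def using Poly_Mapping.keys_add[of u v] by blast

lemma keys_diff_nat: "ks (u - v :: mono) \<subseteq> ks u"
  by (auto simp: in_keys_iff lookup_minus_nat)

lemma in_vars_diff: "in_vars n u \<Longrightarrow> in_vars n (u - v)"
  unfolding in_vars_def using keys_diff_nat[of u v] by blast

lemma mdvd_add: "mdvd g (g + u)"
  by (simp add: mdvd_def lookup_add)

lemma mdvd_decomp: "mdvd g m \<Longrightarrow> m = g + (m - g)"
  by (rule poly_mapping_eqI) (auto simp: mdvd_def lookup_add lookup_minus_nat)

lemma mdvd_trans: "mdvd u v \<Longrightarrow> mdvd v w \<Longrightarrow> mdvd u w"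
  unfolding mdvd_def using order_trans by blast

lemma mdvd_antisym: "mdvd u v \<Longrightarrow> mdvd v u \<Longrightarrow> u = v"
  unfolding mdvd_def by (rule poly_mapping_eqI) (simp add: antisym)

lemma mdvd_add_right: "mdvd g m \<Longrightarrow> mdvd g (m + u)"
  unfolding mdvd_def by (auto simp: lookup_add intro: trans_le_add1)

lemma pring_add: "p \<in> pring n \<Longrightarrow> q \<in> pring n \<Longrightarrow> p + q \<in> pring n"
  unfolding pring_def using Poly_Mapping.keys_add[of p q] by blast

lemma pring_mult: "p \<in> pring n \<Longrightarrow> q \<in> pring n \<Longrightarrow> p * q \<in> pring n"
  unfolding pring_def using Poly_Mapping.keys_mult[of p q] by (auto dest!: subsetD intro: in_vars_add)

lemma pring_zero: "0 \<in> pring n"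
  by (simp add: pring_def)

definition MI :: "nat \<Rightarrow> mono set \<Rightarrow> 'k::comm_ring_1 mpoly set" where
  "MI n Ms = {p \<in> pring n. \<forall>m\<in>ks p. m \<in> Ms}"

definition upclosed :: "nat \<Rightarrow> mono set \<Rightarrow> bool" where
  "upclosed n Ms \<longleftrightarrow> (\<forall>m\<in>Ms. in_vars n m \<and> (\<forall>u. in_vars n u \<longrightarrow> m + u \<in> Ms))"

lemma is_ideal_MI:
  assumes "upclosed n Ms"
  shows "is_ideal n (MI n Ms :: 'k::comm_ring_1 mpoly set)"
  unfolding is_ideal_def
proof (intro conjI ballI)
  show "MI n Ms \<subseteq> pring n" by (auto simp: MI_def)
  show "0 \<in> (MI n Ms :: 'k mpoly set)" by (simp add: MI_def pring_zero)
  fix p q :: "'k mpoly" assume p: "p \<in> MI n Ms"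
  { assume q: "q \<in> MI n Ms"
    show "p + q \<in> MI n Ms" using p q Poly_Mapping.keys_add[of p q] by (auto simp: MI_def pring_add) }
  { assume r: "q \<in> pring n"
    have "\<forall>m\<in>ks (q * p). m \<in> Ms"
    proof
      fix m assume "m \<in> ks (q * p)"
      then obtain u v where uv: "m = u + v" "u \<in> ks q" "v \<in> ks p" using Poly_Mapping.keys_mult[of q p] by blast
      have "v \<in> Ms" using p uv by (auto simp: MI_def)
      moreover have "in_vars n u" using r uv by (auto simp: pring_def)
      ultimately have "v + u \<in> Ms" using assms by (auto simp: upclosed_def)
      thus "m \<in> Ms" using uv by (simp add: add.commute)
    qed
    thus "q * p \<in> MI n Ms" using p r by (auto simp: MI_def pring_mult) }
qed

lemma keys_hcomp: "ks (hcomp i p) \<subseteq> ks p"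
proof -
  have "ks (hcomp i p) \<subseteq> (\<Union>m\<in>{m\<in>ks p. mdeg m = i}. ks (sg m (lk p m)))"
    unfolding hcomp_def by (rule Poly_Mapping.keys_sum)
  also have "\<dots> \<subseteq> ks p" by auto
  finally show ?thesis .
qed

lemma homogeneous_MI:
  assumes "upclosed n Ms"
  shows "homogeneous_ideal n (MI n Ms :: 'k::comm_ring_1 mpoly set)"
  unfolding homogeneous_ideal_def
proof (intro conjI ballI allI)
  show "is_ideal n (MI n Ms :: 'k mpoly set)" by (rule is_ideal_MI[OF assms])
  fix p :: "'k mpoly" and i assume "p \<in> MI n Ms"
  thus "hcomp i p \<in> MI n Ms" using keys_hcomp[of i p] by (auto simp: MI_def pring_def)
qed

lemma poly_expand: "p = (\<Sum>m\<in>ks p. sg m (lk p m))"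
proof (rule poly_mapping_eqI)
  fix k
  have "lk (\<Sum>m\<in>ks p. sg m (lk p m)) k = (\<Sum>m\<in>ks p. (lk p m when m = k))"
    by (simp add: lookup_sum lookup_single)
  also have "\<dots> = (\<Sum>m\<in>ks p. if m = k then lk p m else 0)" by (simp add: when_def)
  also have "\<dots> = lk p k" by (simp add: sum.delta in_keys_iff)
  finally show "lk p k = lk (\<Sum>m\<in>ks p. sg m (lk p m)) k" by simp
qed

lemma ideal_sum:
  assumes "is_ideal n J"
  shows "finite A \<Longrightarrow> (\<forall>x\<in>A. f x \<in> J) \<Longrightarrow> sum f A \<in> J"
  by (induction A rule: finite_induct) (use assms in \<open>auto simp: is_ideal_def\<close>)

lemma sg_inj_key: "sg x (1::'k::zero_neq_one) = sg y 1 \<Longrightarrow> x = y"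
  by (metis lookup_single_eq lookup_single_not_eq zero_neq_one)

lemma upclosed_gen:
  "upclosed n {m. in_vars n m \<and> (\<exists>g\<in>G. mdvd g m)}"
  unfolding upclosed_def by (auto intro: in_vars_add mdvd_add_right)

lemma mon_keys: "ks (mon m :: 'k::{comm_ring_1} mpoly) = {m}"
  by (simp add: mon_def)

lemma gen_ideal_MI:
  assumes G: "\<forall>g\<in>G. in_vars n g"
  shows "gen_ideal n (mon ` G) = (MI n {m. in_vars n m \<and> (\<exists>g\<in>G. mdvd g m)} :: 'k::comm_ring_1 mpoly set)"
proof
  let ?Ms = "{m. in_vars n m \<and> (\<exists>g\<in>G. mdvd g m)}"
  have "is_ideal n (MI n ?Ms :: 'k mpoly set)" by (rule is_ideal_MI[OF upclosed_gen])
  moreover have "mon ` G \<subseteq> (MI n ?Ms :: 'k mpoly set)"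
    using G by (auto simp: MI_def pring_def mon_keys mdvd_def)
  ultimately show "gen_ideal n (mon ` G) \<subseteq> (MI n ?Ms :: 'k mpoly set)"
    unfolding gen_ideal_def by blast
  show "(MI n ?Ms :: 'k mpoly set) \<subseteq> gen_ideal n (mon ` G)"
    unfolding gen_ideal_def
  proof (intro Inter_greatest subsetI, clarify)
    fix p :: "'k mpoly" and J :: "'k mpoly set" assume p: "p \<in> MI n ?Ms" and J: "is_ideal n J" "mon ` G \<subseteq> J"
    have "(\<Sum>m\<in>ks p. sg m (lk p m)) \<in> J"
    proof (rule ideal_sum[OF J(1)], simp, rule ballI)
      fix m assume m: "m \<in> ks p"
      then obtain g where g: "g \<in> G" "mdvd g m" "in_vars n m" using p by (auto simp: MI_def)
      have "sg m (lk p m) = sg (m - g) (lk p m) * mon g"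
        using mdvd_decomp[OF g(2)] by (simp add: mon_def mult_single add.commute)
      moreover have "sg (m - g) (lk p m) \<in> pring n"
        using in_vars_diff[OF g(3)] by (simp add: pring_def)
      moreover have "mon g \<in> J" using J(2) g(1) by auto
      ultimately show "sg m (lk p m) \<in> J" using J(1) by (simp add: is_ideal_def)
    qed
    thus "p \<in> J" using poly_expand[of p] by simp
  qed
qed


lemma smul_mon: "smul c (mon m) = sg m c"
  by (simp add: smul_def mon_def mult_single)

lemma smul_zero_left[simp]: "smul 0 p = 0"
  by (simp add: smul_def)

interpretation mvs: vector_space "smul :: 'a::field \<Rightarrow> 'a mpoly \<Rightarrow> 'a mpoly"
  by unfold_locales (simp_all add: smul_def distrib_left single_add distrib_right mult.assoc[symmetric] mult_single)

lemma lin_indep_independent: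
  assumes "finite S" "lin_indep (S :: 'k::field mpoly set)"
  shows "\<not> mvs.dependent S"
  unfolding mvs.independent_explicit_finite_subsets
proof (intro allI impI ballI)
  fix T u v assume T: "T \<subseteq> S" "finite T" and s: "(\<Sum>v\<in>T. smul (u v) v) = 0" and v: "v \<in> T"
  define c where "c v = (if v \<in> T then u v else 0)" for v
  have "(\<Sum>v\<in>S. smul (c v) v) = (\<Sum>v\<in>T. smul (c v) v)"
    by (rule sum.mono_neutral_right) (use assms T in \<open>auto simp: c_def\<close>)
  also have "\<dots> = 0" using s by (simp add: c_def)
  finally have all0: "\<forall>p\<in>S. c p = 0" using assms(2) by (simp add: lin_indep_def)
  have "v \<in> S" using v T by blast
  hence "c v = 0" using all0 by blast
  thus "u v = 0" using v by (simp add: c_def)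
qed

lemma lin_indep_mons: "finite A \<Longrightarrow> lin_indep (mon ` A :: 'k::field mpoly set)"
  unfolding lin_indep_def
proof (intro allI impI ballI)
  fix c and p :: "'k mpoly" assume A: "finite A" and s: "(\<Sum>p\<in>mon ` A. smul (c p) p) = (0::'k mpoly)" and p: "p \<in> mon ` A"
  have inj: "inj_on (mon :: mono \<Rightarrow> 'k mpoly) A" by (rule inj_onI) (simp add: mon_def sg_inj_key)
  have "(\<Sum>p\<in>mon ` A. smul (c p) p) = (\<Sum>m\<in>A. sg m (c (mon m)))"
    by (simp add: sum.reindex[OF inj] smul_mon)
  then have s': "(\<Sum>m\<in>A. sg m (c (mon m))) = 0" using s by simp
  obtain m where m: "m \<in> A" "p = mon m" using p by auto
  have "lk (\<Sum>m\<in>A. sg m (c (mon m))) m = (\<Sum>m'\<in>A. if m' = m then c (mon m') else 0)"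
    by (simp add: lookup_sum lookup_single when_def)
  also have "\<dots> = c (mon m)" using m A by (simp add: sum.delta)
  finally show "c p = 0" using s' m by simp
qed

lemma dimI_MI:
  assumes up: "upclosed n Ms" and fin: "finite {m\<in>Ms. mdeg m = t}"
  shows "dimI (MI n Ms :: 'k::field mpoly set) t = card {m\<in>Ms. mdeg m = t}"
proof -
  let ?Mt = "{m\<in>Ms. mdeg m = t}"
  let ?X = "{card S | S. finite S \<and> S \<subseteq> piece (MI n Ms :: 'k mpoly set) t \<and> lin_indep S}"
  have inj: "inj_on (mon :: mono \<Rightarrow> 'k mpoly) ?Mt" by (rule inj_onI) (simp add: mon_def sg_inj_key)
  have mem: "card ?Mt \<in> ?X"
  proof -
    have "mon ` ?Mt \<subseteq> piece (MI n Ms :: 'k mpoly set) t"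
      using up by (auto simp: piece_def MI_def pring_def mon_keys upclosed_def)
    moreover have "card (mon ` ?Mt :: 'k mpoly set) = card ?Mt" by (rule card_image[OF inj])
    moreover have "finite (mon ` ?Mt :: 'k mpoly set)" using fin by simp
    moreover have "lin_indep (mon ` ?Mt :: 'k mpoly set)" by (rule lin_indep_mons[OF fin])
    ultimately have "\<exists>S. card ?Mt = card S \<and> finite S \<and> S \<subseteq> piece (MI n Ms :: 'k mpoly set) t \<and> lin_indep S"
      by (intro exI[of _ "mon ` ?Mt"]) simp
    thus ?thesis by simp
  qed
  have bound: "\<forall>x\<in>?X. x \<le> card ?Mt"
  proof
    fix x assume "x \<in> ?X"
    then obtain S where S: "x = card S" "finite S" "S \<subseteq> piece (MI n Ms :: 'k mpoly set) t" "lin_indep S" by blast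
    have "S \<subseteq> mvs.span (mon ` ?Mt)"
    proof
      fix p assume "p \<in> S"
      hence p: "p \<in> MI n Ms" "\<forall>m\<in>ks p. mdeg m = t" using S by (auto simp: piece_def)
      have "(\<Sum>m\<in>ks p. smul (lk p m) (mon m)) \<in> mvs.span (mon ` ?Mt)"
        by (rule mvs.span_sum, rule mvs.span_scale, rule mvs.span_base) (use p in \<open>auto simp: MI_def\<close>)
      moreover have "(\<Sum>m\<in>ks p. smul (lk p m) (mon m)) = p"
        using poly_expand[of p] by (simp add: smul_mon)
      ultimately show "p \<in> mvs.span (mon ` ?Mt)" by simp
    qed
    moreover have "finite (mon ` ?Mt :: 'k mpoly set)" using fin by simp
    ultimately have "card S \<le> card (mon ` ?Mt :: 'k mpoly set)"
      using mvs.independent_span_bound[of "mon ` ?Mt" S] lin_indep_independent[OF S(2,4)] by simp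
    thus "x \<le> card ?Mt" using S(1) card_image[OF inj] by simp
  qed
  show ?thesis unfolding dimI_def by (rule cSup_eq_maximum[OF mem]) (use bound in auto)
qed



lemma lex_gt_irrefl: "\<not> lex_gt m m"
  by (simp add: lex_gt_def)

lemma lex_gt_total:
  assumes "m \<noteq> m'"
  shows "lex_gt m m' \<or> lex_gt m' m"
proof -
  have "\<exists>i. lk m i \<noteq> lk m' i"
  proof (rule ccontr)
    assume "\<not> (\<exists>i. lk m i \<noteq> lk m' i)"
    hence "m = m'" by (intro poly_mapping_eqI) simp
    thus False using assms by simp
  qed
  define j where "j = (LEAST i. lk m i \<noteq> lk m' i)"
  have j: "lk m j \<noteq> lk m' j" unfolding j_def by (rule LeastI_ex) fact
  have lt: "\<forall>i<j. lk m i = lk m' i" unfolding j_def using not_less_Least by blast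
  show ?thesis
  proof (cases "lk m' j < lk m j")
    case True
    hence "lex_gt m m'" unfolding lex_gt_def using lt by (intro exI[of _ j]) simp
    thus ?thesis by simp
  next
    case False hence "lk m j < lk m' j" using j by simp
    hence "lex_gt m' m" unfolding lex_gt_def using lt by (intro exI[of _ j]) simp
    thus ?thesis by simp
  qed
qed

lemma in_vars_fin: "finite {m. in_vars n m \<and> mdeg m = t}"
  by (rule finite_subset[OF _ finite_bounded_monos[of "{..n}" t]])
     (auto simp: in_vars_def lk_le)

lemma Egen_gen: "Egen n d a k = gen a d (n - (d+1)) k"
  by (simp add: Egen_def gen_def)

lemma mdvd_single1: "mdvd (sg i 1) m \<longleftrightarrow> 1 \<le> lk m i"
  by (auto simp: mdvd_def lookup_single when_def)

lemma mdvd_single1': "mdvd (sg i (Suc 0)) m \<longleftrightarrow> 0 < lk m i"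
  using mdvd_single1[of i m] by (simp add: Suc_le_eq)

lemma gens_i_cases:
  assumes "g \<in> gens_i n d a"
  obtains i where "i + d + 2 \<le> n" "g = sg i 1" | k where "k \<le> d" "g = gen a d (n - (d+1)) k"
  using assms unfolding gens_i_def Egen_gen by blast

lemma lookup_gen_zero: "i > s + k \<Longrightarrow> lk (gen a D s k) i = 0"
  by (simp add: lookup_gen)

lemma gens_i_in_vars:
  assumes "d < n" "g \<in> gens_i n d a"
  shows "in_vars n g" "lk g n = 0"
proof -
  have "\<forall>i. n \<le> i \<longrightarrow> lk g i = 0"
    using assms(2)
  proof (cases rule: gens_i_cases)
    case (1 i) thus ?thesis by (auto simp: lookup_single when_def)
  next
    case (2 k) thus ?thesis using assms(1) by (auto intro!: lookup_gen_zero)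
  qed
  hence H: "\<And>i. n \<le> i \<Longrightarrow> lk g i = 0" by blast
  show "lk g n = 0" using H by simp
  show "in_vars n g" unfolding in_vars_def
  proof
    fix x assume "x \<in> ks g"
    hence "lk g x \<noteq> 0" by (simp add: in_keys_iff)
    thus "x \<in> {..n}" using H[of x] by (cases "n \<le> x") auto
  qed
qed

definition Mset :: "nat \<Rightarrow> nat \<Rightarrow> (nat \<Rightarrow> nat) \<Rightarrow> mono set" where
  "Mset n d a = {m. in_vars n m \<and> (\<exists>g\<in>gens_i n d a. mdvd g m)}"

lemma complement_Std:
  assumes "d < n"
  shows "{m. in_vars n m \<and> mdeg m = t} - Mset n d a = Std a d (n - (d+1)) t"
proof (intro set_eqI iffI)
  let ?c = "n - (d+1)"
  fix m assume m: "m \<in> {m. in_vars n m \<and> mdeg m = t} - Mset n d a"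
  hence iv: "in_vars n m" "mdeg m = t" and nd: "\<forall>g\<in>gens_i n d a. \<not> mdvd g m" by (auto simp: Mset_def)
  have "ks m \<subseteq> {?c..<?c + (d+2)}"
  proof
    fix i assume i: "i \<in> ks m"
    have "\<not> i < ?c"
    proof
      assume "i < ?c"
      hence "sg i 1 \<in> gens_i n d a" by (auto simp: gens_i_def)
      moreover have "mdvd (sg i 1) m" using i by (simp add: mdvd_single1' in_keys_iff)
      ultimately show False using nd by blast
    qed
    thus "i \<in> {?c..<?c + (d+2)}" using i iv(1) assms by (auto simp: in_vars_def)
  qed
  moreover have "\<forall>k\<le>d. \<not> mdvd (gen a d ?c k) m" using nd by (auto simp: gens_i_def Egen_gen)
  ultimately show "m \<in> Std a d ?c t" using iv by (simp add: Std_def MonS_def)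
next
  let ?c = "n - (d+1)"
  fix m assume "m \<in> Std a d ?c t"
  hence m: "ks m \<subseteq> {?c..<?c + (d+2)}" "mdeg m = t" "\<forall>k\<le>d. \<not> mdvd (gen a d ?c k) m"
    by (auto simp: Std_def MonS_def)
  have iv: "in_vars n m" using m(1) assms by (auto simp: in_vars_def)
  have "\<forall>g\<in>gens_i n d a. \<not> mdvd g m"
  proof
    fix g assume "g \<in> gens_i n d a"
    thus "\<not> mdvd g m"
    proof (cases rule: gens_i_cases)
      case (1 i)
      hence "i \<notin> ks m" using m(1) by auto
      thus ?thesis using 1 by (simp add: mdvd_single1' in_keys_iff)
    next
      case (2 k) thus ?thesis using m(3) by auto
    qed
  qed
  thus "m \<in> {m. in_vars n m \<and> mdeg m = t} - Mset n d a" using iv m(2) by (auto simp: Mset_def)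
qed

lemma Mset_lex_up:
  assumes "d < n" "m \<in> Mset n d a" "in_vars n m'" "lex_gt m' m"
  shows "m' \<in> Mset n d a"
proof -
  let ?c = "n - (d+1)"
  obtain g where g: "g \<in> gens_i n d a" "mdvd g m" using assms(2) by (auto simp: Mset_def)
  obtain j0 where j0: "lk m j0 < lk m' j0" "\<forall>i<j0. lk m' i = lk m i"
    using assms(4) unfolding lex_gt_def by auto
  have small: "m' \<in> Mset n d a" if "j0 < ?c"
  proof -
    have "sg j0 1 \<in> gens_i n d a" using that by (auto simp: gens_i_def)
    moreover have "mdvd (sg j0 1) m'" using j0(1) by (simp add: mdvd_single1')
    ultimately show ?thesis using assms(3) by (auto simp: Mset_def)
  qed
  show ?thesis using g(1)
  proof (cases rule: gens_i_cases)
    case (1 i)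
    show ?thesis
    proof (cases "i < j0")
      case True
      hence "mdvd g m'" using g(2) j0(2) 1 by (simp add: mdvd_single1')
      thus ?thesis using assms(3) g(1) by (auto simp: Mset_def)
    next
      case False thus ?thesis using small 1 by simp
    qed
  next
    case (2 k)
    show ?thesis
    proof (cases "j0 < ?c")
      case True thus ?thesis using small by simp
    next
      case False
      show ?thesis
      proof (cases "j0 > ?c + k")
        case True
        have "mdvd g m'" unfolding mdvd_def
        proof
          fix i show "lk g i \<le> lk m' i"
          proof (cases "i < j0")
            case True thus ?thesis using g(2) j0(2) by (simp add: mdvd_def)
          next
            case False thus ?thesis using 2 \<open>j0 > ?c + k\<close> by (simp add: lookup_gen_zero)
          qed
        qed
        thus ?thesis using assms(3) g(1) by (auto simp: Mset_def)
      next
        case False2: False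
        define q where "q = j0 - ?c"
        have q: "q \<le> k" "j0 = ?c + q" using False False2 by (auto simp: q_def)
        have "mdvd (gen a d ?c q) m'" unfolding mdvd_def
        proof
          fix i show "lk (gen a d ?c q) i \<le> lk m' i"
          proof (cases "i < j0")
            case True
            have "lk (gen a d ?c q) i = lk (gen a d ?c k) i"
              using True q by (auto simp: lookup_gen)
            also have "\<dots> \<le> lk m i" using g(2) 2 by (simp add: mdvd_def)
            finally show ?thesis using j0(2) True by simp
          next
            case False
            show ?thesis
            proof (cases "i = j0")
              case True
              have "lk (gen a d ?c k) j0 \<le> lk m j0" using g(2) 2 by (simp add: mdvd_def)
              moreover have "lk (gen a d ?c q) j0 \<le> Suc (lk (gen a d ?c k) j0)"
                using q 2(1) by (auto simp: lookup_gen)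
              moreover have "q = k \<Longrightarrow> lk (gen a d ?c q) j0 \<le> lk (gen a d ?c k) j0" by simp
              ultimately show ?thesis using j0(1) True q by (cases "q = k") auto
            next
              case False
              thus ?thesis using \<open>\<not> i < j0\<close> q by (simp add: lookup_gen_zero)
            qed
          qed
        qed
        moreover have "gen a d ?c q \<in> gens_i n d a" using q 2 by (auto simp: gens_i_def Egen_gen)
        ultimately show ?thesis using assms(3) by (auto simp: Mset_def)
      qed
    qed
  qed
qed



lemma Mset_upclosed: "upclosed n (Mset n d a)"
  unfolding Mset_def by (rule upclosed_gen)

lemma Mset_in_vars: "m \<in> Mset n d a \<Longrightarrow> in_vars n m"
  by (simp add: Mset_def)

lemma Mset_deg_eq: "{m \<in> Mset n d a. mdeg m = t} = {m. in_vars n m \<and> mdeg m = t} \<inter> Mset n d a"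
  by (auto simp: Mset_def)

lemma fin_Mset_deg: "finite {m \<in> Mset n d a. mdeg m = t}"
  by (simp add: Mset_deg_eq in_vars_fin)

lemma hilb_MI:
  assumes "d < n"
  shows "hilb n (MI n (Mset n d a) :: 'k::field mpoly set) t = card (Std a d (n - (d+1)) t)"
proof -
  let ?Mon = "{m. in_vars n m \<and> mdeg m = t}"
  have "dimI (MI n (Mset n d a) :: 'k mpoly set) t = card {m \<in> Mset n d a. mdeg m = t}"
    by (rule dimI_MI[OF Mset_upclosed fin_Mset_deg])
  also have "\<dots> = card (?Mon \<inter> Mset n d a)" by (simp add: Mset_deg_eq)
  finally have "hilb n (MI n (Mset n d a) :: 'k mpoly set) t = card ?Mon - card (?Mon \<inter> Mset n d a)"
    by (simp add: hilb_def nmon_def)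
  also have "\<dots> = card (?Mon - Mset n d a)"
    by (simp add: card_Diff_subset_Int in_vars_fin)
  also have "\<dots> = card (Std a d (n - (d+1)) t)" using complement_Std[OF assms] by simp
  finally show ?thesis .
qed

lemma e_sum:
  assumes "d < n"
    and a_def: "\<forall>j<n. int (a j) = (if j \<le> d then e j else 0) - (if Suc j \<le> d then e (Suc j) else 0)"
  shows "i \<le> d \<Longrightarrow> e i = int (\<Sum>j\<in>{i..d}. a j)"
proof (induction "d - i" arbitrary: i)
  case 0
  hence "i = d" by simp
  thus ?case using a_def[rule_format, of d] assms(1) by simp
next
  case (Suc x)
  hence i: "i < d" "x = d - Suc i" by auto
  have "e (Suc i) = int (\<Sum>j\<in>{Suc i..d}. a j)" using Suc.hyps(1)[OF i(2)] i by simp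
  moreover have "int (a i) = e i - e (Suc i)" using a_def[rule_format, of i] i assms(1) by simp
  moreover have "(\<Sum>j\<in>{i..d}. a j) = a i + (\<Sum>j\<in>{Suc i..d}. a j)"
    using i by (simp add: sum.atLeast_Suc_atMost)
  ultimately show ?case by simp
qed

lemma hilbP_eq:
  assumes "d < n"
    and a_def: "\<forall>j<n. int (a j) = (if j \<le> d then e j else 0) - (if Suc j \<le> d then e (Suc j) else 0)"
    and t: "(\<Sum>j\<le>d. a j) \<le> t"
  shows "hilbP d e t = of_nat (card (Std a d (n - (d+1)) t))"
proof -
  have "hilbP d e t = (\<Sum>i\<le>d. (of_nat t + of_nat i gchoose (i+1))
        - (of_nat t + of_nat i - of_nat (\<Sum>j\<in>{i..d}. a j) gchoose (i+1)))"
    unfolding hilbP_def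
    by (rule sum.cong) (auto simp: e_sum[OF assms(1,2)])
  also have "\<dots> = of_nat (card (Std a d (n - (d+1)) t))"
    by (rule count_formula[symmetric, OF t])
  finally show ?thesis .
qed

lemma MI_has_hilb:
  assumes "d < n"
    and a_def: "\<forall>j<n. int (a j) = (if j \<le> d then e j else 0) - (if Suc j \<le> d then e (Suc j) else 0)"
  shows "has_hilb_poly n (MI n (Mset n d a) :: 'k::field mpoly set) (hilbP d e)"
  unfolding has_hilb_poly_def
  by (rule exI[of _ "\<Sum>j\<le>d. a j"]) (simp add: hilb_MI[OF assms(1)] hilbP_eq[OF assms])

lemma toplex_eq:
  assumes "d < n"
    and k: "card {m \<in> Mset n d a. mdeg m = t} \<le> k"
    and k2: "k = card {m \<in> Mset n d a. mdeg m = t} \<or> (card {m \<in> Mset n d a. mdeg m = t} = nmon n t \<and> nmon n t \<le> k)"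
  shows "toplex n t k = {m \<in> Mset n d a. mdeg m = t}"
proof -
  let ?Mon = "{m. in_vars n m \<and> mdeg m = t}"
  let ?Mt = "{m \<in> Mset n d a. mdeg m = t}"
  have finMon: "finite ?Mon" by (rule in_vars_fin)
  have MtMon: "?Mt \<subseteq> ?Mon" by (auto simp: Mset_def)
  show ?thesis
  proof (intro set_eqI iffI)
    fix m assume m: "m \<in> toplex n t k"
    hence mm: "in_vars n m" "mdeg m = t" and c: "card {m'. in_vars n m' \<and> mdeg m' = t \<and> lex_gt m' m} < k"
      by (auto simp: toplex_def)
    show "m \<in> ?Mt"
    proof (rule ccontr)
      assume nm: "m \<notin> ?Mt"
      have sub: "?Mt \<subseteq> {m'. in_vars n m' \<and> mdeg m' = t \<and> lex_gt m' m}"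
      proof
        fix m' assume m': "m' \<in> ?Mt"
        hence "m' \<noteq> m" using nm by auto
        hence "lex_gt m' m \<or> lex_gt m m'" using lex_gt_total by blast
        moreover have "\<not> lex_gt m m'"
          using Mset_lex_up[OF assms(1), where m=m' and m'=m] m' mm nm by auto
        ultimately show "m' \<in> {m'. in_vars n m' \<and> mdeg m' = t \<and> lex_gt m' m}" using m' MtMon by auto
      qed
      have fin2: "finite {m'. in_vars n m' \<and> mdeg m' = t \<and> lex_gt m' m}"
        by (rule finite_subset[OF _ finMon]) auto
      from k2 show False
      proof
        assume "k = card ?Mt"
        thus False using card_mono[OF fin2 sub] c by simp
      next
        assume nk: "card ?Mt = nmon n t \<and> nmon n t \<le> k"
        hence "card ?Mt = card ?Mon" by (simp add: nmon_def)
        hence "?Mt = ?Mon" using card_subset_eq[OF finMon MtMon] by simp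
        thus False using nm mm by auto
      qed
    qed
  next
    fix m assume m: "m \<in> ?Mt"
    have sub: "{m'. in_vars n m' \<and> mdeg m' = t \<and> lex_gt m' m} \<subseteq> ?Mt - {m}"
    proof
      fix x assume x: "x \<in> {m'. in_vars n m' \<and> mdeg m' = t \<and> lex_gt m' m}"
      have "m \<in> Mset n d a" using m by simp
      hence "x \<in> Mset n d a" using Mset_lex_up[OF assms(1)] x by blast
      moreover have "x \<noteq> m" using x lex_gt_irrefl by auto
      ultimately show "x \<in> ?Mt - {m}" using x by auto
    qed
    have "card {m'. in_vars n m' \<and> mdeg m' = t \<and> lex_gt m' m} \<le> card (?Mt - {m})"
      by (rule card_mono[OF _ sub]) (simp add: fin_Mset_deg)
    also have "\<dots> < card ?Mt" by (rule card_Diff1_less[OF fin_Mset_deg m])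
    finally show "m \<in> toplex n t k" using m k by (auto simp: toplex_def Mset_def)
  qed
qed



lemma lookup_mult_mon: "lk (f * mon v :: 'k::comm_ring_1 mpoly) (u + v) = lk f u"
proof -
  have "lk (f * mon v) (u + v) = (\<Sum>l. lk f l * (\<Sum>q. (1 when v = q) when u + v = l + q))"
    by (simp add: mon_def lookup_mult lookup_single)
  also have "\<dots> = (\<Sum>l. lk f l * (1 when u + v = l + v))"
  proof -
    have inner: "(\<Sum>q. ((1::'k) when v = q) when u + v = l + q) = (1 when u + v = l + v)" for l
    proof -
      have "(\<Sum>q. ((1::'k) when v = q) when u + v = l + q) = (\<Sum>q. ((1 when u + v = l + q) when v = q))"
        by (rule Sum_any.cong) (simp add: when_def)
      thus ?thesis by simp
    qed
    show ?thesis by (simp only: inner)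
  qed
  also have "\<dots> = (\<Sum>l. (lk f l when l = u))"
    by (rule Sum_any.cong) (auto simp: when_def)
  also have "\<dots> = lk f u" by simp
  finally show ?thesis .
qed

lemma Mset_cancel_n:
  assumes "d < n" "u + v \<in> Mset n d a" "in_vars n u" "\<And>i. i \<noteq> n \<Longrightarrow> lk v i = 0"
  shows "u \<in> Mset n d a"
proof -
  obtain g where g: "g \<in> gens_i n d a" "mdvd g (u + v)" using assms(2) by (auto simp: Mset_def)
  have "mdvd g u" unfolding mdvd_def
  proof
    fix i show "lk g i \<le> lk u i"
    proof (cases "i = n")
      case True thus ?thesis using gens_i_in_vars(2)[OF assms(1) g(1)] by simp
    next
      case False
      have "lk g i \<le> lk u i + lk v i" using g(2) by (simp add: mdvd_def lookup_add)
      thus ?thesis using assms(4)[OF False] by simp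
    qed
  qed
  thus ?thesis using g(1) assms(3) by (auto simp: Mset_def)
qed

lemma sat_MI:
  assumes dn: "d < n" and TT: "\<forall>t\<ge>T. toplex n t (dimI I t) = {m \<in> Mset n d a. mdeg m = t}"
  shows "saturation n (lexH n I) = (MI n (Mset n d a) :: 'k::field mpoly set)"
proof (intro set_eqI iffI)
  fix f :: "'k mpoly" assume "f \<in> MI n (Mset n d a)"
  hence f: "f \<in> pring n" "\<forall>m\<in>ks f. m \<in> Mset n d a" by (auto simp: MI_def)
  have "\<forall>g\<in>pring n. (\<forall>m\<in>ks g. Suc T \<le> mdeg m) \<longrightarrow> f * g \<in> lexH n I"
  proof (intro ballI impI)
    fix g :: "'k mpoly" assume g: "g \<in> pring n" "\<forall>m\<in>ks g. Suc T \<le> mdeg m"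
    have "\<forall>m\<in>ks (f * g). m \<in> toplex n (mdeg m) (dimI I (mdeg m))"
    proof
      fix m assume "m \<in> ks (f * g)"
      then obtain u v where uv: "m = u + v" "u \<in> ks f" "v \<in> ks g" using Poly_Mapping.keys_mult[of f g] by blast
      have "u \<in> Mset n d a" using f uv by auto
      moreover have "in_vars n v" using g uv by (auto simp: pring_def)
      ultimately have "m \<in> Mset n d a" using Mset_upclosed[of n d a] uv by (auto simp: upclosed_def)
      moreover have "T \<le> mdeg m" using g uv by (auto simp: mdeg_add)
      ultimately show "m \<in> toplex n (mdeg m) (dimI I (mdeg m))" using TT by auto
    qed
    thus "f * g \<in> lexH n I" using pring_mult[OF f(1) g(1)] by (simp add: lexH_def)
  qed
  thus "f \<in> saturation n (lexH n I)" using f(1) unfolding saturation_def by (intro CollectI conjI exI[of _ "Suc T"]) auto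
next
  fix f :: "'k mpoly" assume "f \<in> saturation n (lexH n I)"
  then obtain j where f: "f \<in> pring n" "j \<ge> 1"
     and H: "\<forall>g\<in>pring n. (\<forall>m\<in>ks g. j \<le> mdeg m) \<longrightarrow> f * g \<in> lexH n I"
    by (auto simp: saturation_def)
  define v where "v = sg n (j + T)"
  have vp: "(mon v :: 'k mpoly) \<in> pring n" by (simp add: v_def mon_def pring_def in_vars_def)
  have "f * mon v \<in> lexH n I" using H vp by (auto simp: mon_keys v_def)
  hence fl: "\<forall>m\<in>ks (f * mon v). m \<in> toplex n (mdeg m) (dimI I (mdeg m))" by (simp add: lexH_def)
  have "\<forall>u\<in>ks f. u \<in> Mset n d a"
  proof
    fix u assume u: "u \<in> ks f"
    hence "u + v \<in> ks (f * mon v)" by (simp add: in_keys_iff lookup_mult_mon)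
    hence "u + v \<in> toplex n (mdeg (u+v)) (dimI I (mdeg (u+v)))" using fl by blast
    moreover have "T \<le> mdeg (u + v)" by (simp add: mdeg_add v_def)
    ultimately have "u + v \<in> Mset n d a" using TT by auto
    moreover have "in_vars n u" using f u by (auto simp: pring_def)
    ultimately show "u \<in> Mset n d a"
      by (rule Mset_cancel_n[OF dn]) (simp add: v_def lookup_single when_def)
  qed
  thus "f \<in> MI n (Mset n d a)" using f by (simp add: MI_def)
qed

lemma card_Std_eq:
  assumes "d < n"
  shows "card (Std a d (n - (d+1)) t) = nmon n t - card {m \<in> Mset n d a. mdeg m = t}"
    "card {m \<in> Mset n d a. mdeg m = t} \<le> nmon n t"
proof -
  let ?Mon = "{m. in_vars n m \<and> mdeg m = t}"
  have "card (Std a d (n - (d+1)) t) = card (?Mon - Mset n d a)" using complement_Std[OF assms] by simp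
  also have "\<dots> = card ?Mon - card (?Mon \<inter> Mset n d a)"
    by (simp add: card_Diff_subset_Int in_vars_fin)
  finally show "card (Std a d (n - (d+1)) t) = nmon n t - card {m \<in> Mset n d a. mdeg m = t}"
    by (simp add: Mset_deg_eq nmon_def)
  show "card {m \<in> Mset n d a. mdeg m = t} \<le> nmon n t"
    unfolding nmon_def by (rule card_mono[OF in_vars_fin]) (auto simp: Mset_def)
qed

lemma lex_ideal_eq:
  assumes dn: "d < n"
    and a_def: "\<forall>j<n. int (a j) = (if j \<le> d then e j else 0) - (if Suc j \<le> d then e (Suc j) else 0)"
  shows "lex_ideal n (hilbP d e) = (MI n (Mset n d a) :: 'k::field mpoly set)"
  unfolding lex_ideal_def
proof (rule the_equality)
  let ?MI = "MI n (Mset n d a) :: 'k mpoly set"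
  have TT: "\<forall>t\<ge>0. toplex n t (dimI ?MI t) = {m \<in> Mset n d a. mdeg m = t}"
    by (auto simp: dimI_MI[OF Mset_upclosed fin_Mset_deg] intro!: toplex_eq[OF dn])
  show "\<exists>I. homogeneous_ideal n I \<and> has_hilb_poly n I (hilbP d e) \<and> ?MI = saturation n (lexH n I)"
    by (rule exI[of _ ?MI]) (simp add: homogeneous_MI[OF Mset_upclosed] MI_has_hilb[OF dn a_def] sat_MI[OF dn TT])
next
  fix L :: "'k mpoly set"
  let ?MI = "MI n (Mset n d a) :: 'k mpoly set"
  assume "\<exists>I. homogeneous_ideal n I \<and> has_hilb_poly n I (hilbP d e) \<and> L = saturation n (lexH n I)"
  then obtain I :: "'k mpoly set" where I: "has_hilb_poly n I (hilbP d e)" "L = saturation n (lexH n I)" by blast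
  obtain t1 where t1: "\<forall>t\<ge>t1. of_nat (hilb n I t) = hilbP d e t" using I(1) by (auto simp: has_hilb_poly_def)
  let ?T = "max t1 (\<Sum>j\<le>d. a j)"
  have TT: "\<forall>t\<ge>?T. toplex n t (dimI I t) = {m \<in> Mset n d a. mdeg m = t}"
  proof (intro allI impI)
    fix t assume t: "?T \<le> t"
    have "of_nat (hilb n I t) = (of_nat (card (Std a d (n - (d+1)) t)) :: rat)"
      using t1 t hilbP_eq[OF dn a_def, of t] by auto
    hence "hilb n I t = card (Std a d (n - (d+1)) t)" by (simp only: of_nat_eq_iff)
    hence eq: "nmon n t - dimI I t = nmon n t - card {m \<in> Mset n d a. mdeg m = t}"
      using card_Std_eq(1)[OF dn] by (simp add: hilb_def)
    have le: "card {m \<in> Mset n d a. mdeg m = t} \<le> nmon n t" by (rule card_Std_eq(2)[OF dn])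
    show "toplex n t (dimI I t) = {m \<in> Mset n d a. mdeg m = t}"
      by (rule toplex_eq[OF dn]) (use eq le in arith)+
  qed
  show "L = ?MI" using I(2) sat_MI[OF dn TT] by simp
qed



lemma lookup_Lgen: "lk (Lgen n a k) i = (if i < k then a (n - 1 - i)
    else if i = k then a (n - 1 - k) + (if k < n - 1 then 1 else 0) else 0)"
  using sum_shift_delta[of "\<lambda>j. a (n - 1 - j)" k 0 i]
  unfolding Lgen_def lookup_add lookup_sum lookup_single by (auto simp: when_def)

lemma Lgen_small:
  assumes "k < n - (d+1)" "\<forall>j. d < j \<and> j < n \<longrightarrow> a j = 0"
  shows "Lgen n a k = sg k 1"
proof (rule poly_mapping_eqI)
  fix i show "lk (Lgen n a k) i = lk (sg k 1) i"
    using assms by (auto simp: lookup_Lgen lookup_single when_def)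
qed

lemma Lgen_big:
  assumes "d < n" "k' \<le> d" "\<forall>j. d < j \<and> j < n \<longrightarrow> a j = 0"
  shows "Lgen n a (n - (d+1) + k') = gen a d (n - (d+1)) k'"
proof (rule poly_mapping_eqI)
  fix i
  let ?c = "n - (d+1)"
  show "lk (Lgen n a (?c + k')) i = lk (gen a d ?c k') i"
  proof (cases "i < ?c")
    case True thus ?thesis using assms by (auto simp: lookup_Lgen lookup_gen)
  next
    case False
    have e: "n - 1 - i = d - (i - ?c)" using False assms(1) by auto
    thus ?thesis using False assms(1,2) by (auto simp: lookup_Lgen lookup_gen)
  qed
qed

lemma Lgen_set:
  assumes "d < n" "\<forall>j. d < j \<and> j < n \<longrightarrow> a j = 0"
  shows "{Lgen n a k | k. k < n} = gens_i n d a"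
proof (intro set_eqI iffI)
  let ?c = "n - (d+1)"
  fix g assume "g \<in> {Lgen n a k | k. k < n}"
  then obtain k where k: "k < n" "g = Lgen n a k" by blast
  show "g \<in> gens_i n d a"
  proof (cases "k < ?c")
    case True
    hence "g = sg k 1" using Lgen_small[OF True assms(2)] k by simp
    thus ?thesis using True unfolding gens_i_def by auto
  next
    case False
    define k' where "k' = k - ?c"
    have kk: "k = ?c + k'" "k' \<le> d" using False k assms(1) by (auto simp: k'_def)
    hence "g = gen a d ?c k'" using Lgen_big[OF assms(1) kk(2) assms(2)] k by simp
    thus ?thesis using kk unfolding gens_i_def Egen_gen by blast
  qed
next
  let ?c = "n - (d+1)"
  fix g assume "g \<in> gens_i n d a"
  thus "g \<in> {Lgen n a k | k. k < n}"
  proof (cases rule: gens_i_cases)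
    case (1 i)
    hence "i < ?c" "i < n" by auto
    hence "g = Lgen n a i" using Lgen_small[OF _ assms(2)] 1 by simp
    thus ?thesis using \<open>i < n\<close> by blast
  next
    case (2 k)
    hence "g = Lgen n a (?c + k)" using Lgen_big[OF assms(1) _ assms(2)] by simp
    moreover have "?c + k < n" using 2 assms(1) by auto
    ultimately show ?thesis by blast
  qed
qed

lemma mon_in_MI: "(mon m :: 'k::field mpoly) \<in> MI n Ms \<longleftrightarrow> in_vars n m \<and> m \<in> Ms"
  by (simp add: MI_def pring_def mon_keys)

lemma mdvd_refl: "mdvd m m"
  by (simp add: mdvd_def)

lemma mingens_MI:
  assumes "d < n"
  shows "mingens n (MI n (Mset n d a) :: 'k::field mpoly set)
       = {g \<in> gens_i n d a. \<forall>g'\<in>gens_i n d a. mdvd g' g \<longrightarrow> g' = g}"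
proof (intro set_eqI iffI)
  fix m assume "m \<in> mingens n (MI n (Mset n d a) :: 'k mpoly set)"
  hence m: "in_vars n m" "m \<in> Mset n d a"
    and min: "\<And>m'. in_vars n m' \<Longrightarrow> m' \<in> Mset n d a \<Longrightarrow> mdvd m' m \<Longrightarrow> m' = m"
    unfolding mingens_def by (auto simp: mon_in_MI)
  obtain g where g: "g \<in> gens_i n d a" "mdvd g m" using m(2) by (auto simp: Mset_def)
  have gin: "in_vars n g" "g \<in> Mset n d a"
    using gens_i_in_vars(1)[OF assms g(1)] g(1) by (auto simp: Mset_def intro: mdvd_refl)
  have "g = m" using min[OF gin g(2)] .
  moreover have "\<forall>g'\<in>gens_i n d a. mdvd g' m \<longrightarrow> g' = m"
  proof (intro ballI impI)
    fix g' assume g': "g' \<in> gens_i n d a" "mdvd g' m"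
    have "in_vars n g'" "g' \<in> Mset n d a"
      using gens_i_in_vars(1)[OF assms g'(1)] g'(1) by (auto simp: Mset_def intro: mdvd_refl)
    thus "g' = m" using min g'(2) by blast
  qed
  ultimately show "m \<in> {g \<in> gens_i n d a. \<forall>g'\<in>gens_i n d a. mdvd g' g \<longrightarrow> g' = g}" using g(1) by auto
next
  fix g assume "g \<in> {g \<in> gens_i n d a. \<forall>g'\<in>gens_i n d a. mdvd g' g \<longrightarrow> g' = g}"
  hence g: "g \<in> gens_i n d a" and min: "\<And>g'. g' \<in> gens_i n d a \<Longrightarrow> mdvd g' g \<Longrightarrow> g' = g" by auto
  have gin: "in_vars n g" "g \<in> Mset n d a"
    using gens_i_in_vars(1)[OF assms g] g by (auto simp: Mset_def intro: mdvd_refl)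
  have "\<forall>m'. in_vars n m' \<and> m' \<in> Mset n d a \<and> mdvd m' g \<longrightarrow> m' = g"
  proof (intro allI impI)
    fix m' assume m': "in_vars n m' \<and> m' \<in> Mset n d a \<and> mdvd m' g"
    then obtain g'' where g'': "g'' \<in> gens_i n d a" "mdvd g'' m'" by (auto simp: Mset_def)
    have "g'' = g" using min[OF g''(1) mdvd_trans[OF g''(2)]] m' by blast
    thus "m' = g" using mdvd_antisym g''(2) m' by blast
  qed
  thus "g \<in> mingens n (MI n (Mset n d a) :: 'k mpoly set)"
    unfolding mingens_def using gin by (auto simp: mon_in_MI)
qed



lemma mdvd_lk: "mdvd x y \<Longrightarrow> lk x p \<le> lk y p"
  by (simp add: mdvd_def)

lemma lkE_lt: "j < k \<Longrightarrow> lk (gen a d c k) (c + j) = a (d - j)"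
  by (simp add: lookup_gen)

lemma lkE_eq: "lk (gen a d c k) (c + k) = a (d - k) + (if k < d then 1 else 0)"
  by (simp add: lookup_gen)

lemma lkE_gt: "k < j \<Longrightarrow> lk (gen a d c k) (c + j) = 0"
  by (simp add: lookup_gen)

lemma lkE_below: "i < c \<Longrightarrow> lk (gen a d c k) i = 0"
  by (simp add: lookup_gen)

lemma lk_sg1: "lk (sg i (1::nat)) p = (if p = i then 1 else 0)"
  by (simp add: lookup_single when_def)

lemma lk_sg1': "lk (sg i (Suc 0)) p = (if p = i then Suc 0 else 0)"
  by (simp add: lookup_single when_def)

lemma not_dvd_at: "0 < lk x p \<Longrightarrow> lk y p = 0 \<Longrightarrow> \<not> mdvd x y"
  using mdvd_lk[of x y p] by force

lemma E_not_dvd_smaller: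
  assumes "k' < k" "k \<le> d"
  shows "\<not> mdvd (gen a d c k') (gen a d c k)"
proof
  assume "mdvd (gen a d c k') (gen a d c k)"
  hence "lk (gen a d c k') (c + k') \<le> lk (gen a d c k) (c + k')" by (rule mdvd_lk)
  moreover have "k' < d \<or> \<not> k' < d" by simp
  ultimately show False using assms by (auto simp: lkE_eq lkE_lt split: if_splits)
qed

lemma E_ne_sg:
  assumes "i < c" "0 < lk (gen a d c k) (c + p)"
  shows "\<not> mdvd (gen a d c k) (sg i 1)"
  by (rule not_dvd_at[OF assms(2)]) (use assms(1) in \<open>simp add: lk_sg1 lk_sg1'\<close>)

lemma sg_not_dvd_E:
  assumes "i < c"
  shows "\<not> mdvd (sg i 1) (gen a d c k)"
  by (rule not_dvd_at[of _ i]) (simp_all add: lk_sg1 lk_sg1' lkE_below[OF assms])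

lemma sg_dvd_sg: "mdvd (sg i' 1) (sg i (1::nat)) \<Longrightarrow> i' = i"
  using mdvd_lk[of "sg i' 1" "sg i 1" i'] by (simp add: lk_sg1 lk_sg1' split: if_splits)

lemma minimal_all:
  assumes dn: "d < n" and a0: "a 0 \<noteq> 0"
  shows "{g \<in> gens_i n d a. \<forall>g'\<in>gens_i n d a. mdvd g' g \<longrightarrow> g' = g} = gens_i n d a"
proof -
  let ?c = "n - (d+1)"
  have pos: "0 < lk (gen a d ?c k) (?c + k)" if "k \<le> d" for k
    using a0 that by (auto simp: lkE_eq)
  have "\<forall>g\<in>gens_i n d a. \<forall>g'\<in>gens_i n d a. mdvd g' g \<longrightarrow> g' = g"
  proof (intro ballI impI)
    fix g g' assume g: "g \<in> gens_i n d a" and g': "g' \<in> gens_i n d a" and dv: "mdvd g' g"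
    show "g' = g" using g
    proof (cases rule: gens_i_cases)
      case (1 i)
      hence ic: "i < ?c" by auto
      show ?thesis using g'
      proof (cases rule: gens_i_cases)
        case (1 i') thus ?thesis using sg_dvd_sg dv \<open>g = sg i 1\<close> by blast
      next
        case (2 k')
        have "\<not> mdvd g' g" unfolding 2 \<open>g = sg i 1\<close> by (rule E_ne_sg[OF ic pos[OF 2(1)]])
        thus ?thesis using dv by blast
      qed
    next
      case (2 k)
      show ?thesis using g'
      proof (cases rule: gens_i_cases)
        case (1 i')
        hence "i' < ?c" by auto
        thus ?thesis using sg_not_dvd_E dv 1 2 by blast
      next
        case (2 k')
        show ?thesis
        proof (cases k' k rule: linorder_cases)
          case less thus ?thesis using E_not_dvd_smaller[OF less] \<open>k \<le> d\<close> dv 2 \<open>g = gen a d ?c k\<close> by blast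
        next
          case equal thus ?thesis using 2 \<open>g = gen a d ?c k\<close> by simp
        next
          case greater
          have "\<not> mdvd g' g" unfolding 2 \<open>g = gen a d ?c k\<close>
            by (rule not_dvd_at[OF pos[OF 2(1)]]) (simp add: lkE_gt greater)
          thus ?thesis using dv by blast
        qed
      qed
    qed
  qed
  thus ?thesis by blast
qed


lemma W_eq:
  assumes "l + 1 \<le> d" "\<forall>j\<le>l. a j = 0"
  shows "(\<Sum>j\<le>d - (l+1). sg (c + j) (a (d - j))) = gen a d c d"
proof (rule poly_mapping_eqI)
  fix i
  have "lk (\<Sum>j\<le>d - (l+1). sg (c + j) (a (d - j))) i = (\<Sum>j<Suc (d - (l+1)). (a (d - j) when c + j = i))"
    by (simp add: lookup_sum lookup_single lessThan_Suc_atMost)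
  also have "\<dots> = (if c \<le> i \<and> i < c + Suc (d - (l+1)) then a (d - (i - c)) else 0)"
    by (rule sum_shift_delta)
  also have "\<dots> = lk (gen a d c d) i"
  proof (cases "c \<le> i \<and> i < c + Suc (d - (l+1))")
    case True thus ?thesis using assms(1) by (auto simp: lookup_gen)
  next
    case False
    show ?thesis
    proof (cases "c \<le> i \<and> i \<le> c + d")
      case True
      hence "d - (i - c) \<le> l" using False assms(1) by auto
      hence "a (d - (i - c)) = 0" using assms(2) by auto
      moreover have "a 0 = 0" using assms(2) by auto
      ultimately show ?thesis using False True by (auto simp: lookup_gen)
    next
      case False2: False
      thus ?thesis using False by (auto simp: lookup_gen)
    qed
  qed
  finally show "lk (\<Sum>j\<le>d - (l+1). sg (c + j) (a (d - j))) i = lk (gen a d c d) i" .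
qed

lemma minimal_ii:
  assumes dn: "d < n" and ld: "l + 1 \<le> d" and zero: "\<forall>j\<le>l. a j = 0" and apos: "a (l + 1) > 0"
  shows "{g \<in> gens_i n d a. \<forall>g'\<in>gens_i n d a. mdvd g' g \<longrightarrow> g' = g} = gens_ii n d a l"
proof -
  let ?c = "n - (d+1)"
  let ?K = "d - (l+1)"
  let ?E = "gen a d ?c"
  have Kd: "?K < d" using ld by simp
  have Wpos: "0 < lk (?E d) (?c + ?K)"
  proof -
    have "lk (?E d) (?c + ?K) = a (d - ?K)" using Kd by (rule lkE_lt)
    moreover have "d - ?K = l + 1" using ld by simp
    ultimately show ?thesis using apos by simp
  qed
  have Wzero: "lk (?E d) (?c + j) = 0" if "?K < j" "j \<le> d" for j
  proof (cases "j < d")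
    case True
    have "d - j \<le> l" using that by auto
    thus ?thesis using True zero by (simp add: lkE_lt)
  next
    case False
    hence "j = d" using that by simp
    thus ?thesis using zero by (simp add: lkE_eq)
  qed
  have Epos: "0 < lk (?E k) (?c + k)" if "k < d" for k using that by (simp add: lkE_eq)
  have Wdvd: "mdvd (?E d) (?E k)" if "?K \<le> k" "k < d" for k
    unfolding mdvd_def
  proof
    fix i show "lk (?E d) i \<le> lk (?E k) i"
    proof (cases "i < ?c")
      case True thus ?thesis by (simp add: lkE_below)
    next
      case False
      then obtain j where j: "i = ?c + j" by (metis le_add_diff_inverse not_less)
      show ?thesis
      proof (cases j k rule: linorder_cases)
        case less thus ?thesis using j that by (simp add: lkE_lt)
      next
        case equal thus ?thesis using j that by (simp add: lkE_lt lkE_eq)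
      next
        case greater
        show ?thesis
        proof (cases "j \<le> d")
          case True thus ?thesis using Wzero[of j] greater that j by simp
        next
          case False thus ?thesis using j by (simp add: lkE_gt)
        qed
      qed
    qed
  qed
  have Wne: "?E d \<noteq> ?E k" if "k < d" for k
  proof
    assume "?E d = ?E k"
    hence "lk (?E d) (?c + k) = lk (?E k) (?c + k)" by simp
    thus False using that by (simp add: lkE_lt lkE_eq)
  qed
  define M where "M = {sg i 1 | i. i + d + 2 \<le> n} \<union> {?E k | k. k + l + 2 \<le> d} \<union> {?E d}"
  have GM: "gens_ii n d a l = M"
    unfolding gens_ii_def M_def Egen_gen using W_eq[OF ld zero, of ?c] by simp
  have "{g \<in> gens_i n d a. \<forall>g'\<in>gens_i n d a. mdvd g' g \<longrightarrow> g' = g} = M"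
  proof (intro set_eqI iffI)
    fix g assume "g \<in> {g \<in> gens_i n d a. \<forall>g'\<in>gens_i n d a. mdvd g' g \<longrightarrow> g' = g}"
    hence g: "g \<in> gens_i n d a" and min: "\<And>g'. g' \<in> gens_i n d a \<Longrightarrow> mdvd g' g \<Longrightarrow> g' = g" by auto
    show "g \<in> M" using g
    proof (cases rule: gens_i_cases)
      case (1 i) thus ?thesis by (auto simp: M_def)
    next
      case (2 k)
      show ?thesis
      proof (cases "k = d")
        case True thus ?thesis using 2 by (simp add: M_def)
      next
        case False
        show ?thesis
        proof (cases "k + l + 2 \<le> d")
          case True thus ?thesis using 2 by (auto simp: M_def)
        next
          case False2: False
          have kk: "?K \<le> k" "k < d" using False False2 2(1) by auto
          have "?E d \<in> gens_i n d a" by (auto simp: gens_i_def Egen_gen)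
          hence "?E d = g" using min Wdvd[OF kk] 2 by blast
          thus ?thesis using Wne[OF kk(2)] 2 by simp
        qed
      qed
    qed
  next
    fix g assume gM: "g \<in> M"
    have gG: "g \<in> gens_i n d a" using gM ld by (auto simp: M_def gens_i_def Egen_gen)
    have "\<forall>g'\<in>gens_i n d a. mdvd g' g \<longrightarrow> g' = g"
    proof (intro ballI impI)
      fix g' assume g': "g' \<in> gens_i n d a" and dv: "mdvd g' g"
      have posg': "\<exists>p. 0 < lk g' (?c + p)" if "g' = ?E k'" "k' \<le> d" for k'
      proof (cases "k' < d")
        case True thus ?thesis using Epos[OF True] that by blast
      next
        case False thus ?thesis using Wpos that by auto
      qed
      from gM consider (s) i where "i + d + 2 \<le> n" "g = sg i 1" | (e) k where "k + l + 2 \<le> d" "g = ?E k" | (w) "g = ?E d"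
        unfolding M_def by blast
      thus "g' = g"
      proof cases
        case s
        hence ic: "i < ?c" by auto
        show ?thesis using g'
        proof (cases rule: gens_i_cases)
          case (1 i') thus ?thesis using sg_dvd_sg dv s by blast
        next
          case (2 k')
          obtain p where "0 < lk g' (?c + p)" using posg'[OF 2(2) 2(1)] by blast
          hence "\<not> mdvd g' g" unfolding s 2 by (intro E_ne_sg[OF ic]) (simp add: 2)
          thus ?thesis using dv by blast
        qed
      next
        case e
        show ?thesis using g'
        proof (cases rule: gens_i_cases)
          case (1 i')
          hence "i' < ?c" by auto
          thus ?thesis using sg_not_dvd_E dv 1 e by blast
        next
          case (2 k')
          show ?thesis
          proof (cases k' k rule: linorder_cases)
            case less thus ?thesis using E_not_dvd_smaller[OF less] e(1) dv 2 e by auto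
          next
            case equal thus ?thesis using 2 e by simp
          next
            case greater
            show ?thesis
            proof (cases "k' < d")
              case True
              have "\<not> mdvd g' g" unfolding 2 e
                by (rule not_dvd_at[OF Epos[OF True]]) (simp add: lkE_gt greater)
              thus ?thesis using dv by blast
            next
              case False
              hence "k' = d" using 2 by simp
              have "?K > k" using e(1) by simp
              have "\<not> mdvd g' g" unfolding 2 e \<open>k' = d\<close>
                by (rule not_dvd_at[OF Wpos], rule lkE_gt, rule \<open>?K > k\<close>)
              thus ?thesis using dv by blast
            qed
          qed
        qed
      next
        case w
        show ?thesis using g'
        proof (cases rule: gens_i_cases)
          case (1 i')
          hence "i' < ?c" by auto
          thus ?thesis using sg_not_dvd_E dv 1 w by blast
        next
          case (2 k')
          show ?thesis
          proof (cases "k' < d")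
            case True thus ?thesis using E_not_dvd_smaller[OF True] dv 2 w by auto
          next
            case False thus ?thesis using 2 w by simp
          qed
        qed
      qed
    qed
    thus "g \<in> {g \<in> gens_i n d a. \<forall>g'\<in>gens_i n d a. mdvd g' g \<longrightarrow> g' = g}" using gG by blast
  qed
  thus ?thesis using GM by simp
qed


theorem lemma3p3:
  fixes d n :: nat and e :: "nat \<Rightarrow> int" and a :: "nat \<Rightarrow> nat"
  assumes e_mono: "\<forall>i<d. e (Suc i) \<le> e i"
    and e_pos: "e d > 0"
    and n_gt: "n > d"
    and a_def: "\<forall>j<n. int (a j) = (if j \<le> d then e j else 0) - (if Suc j \<le> d then e (Suc j) else 0)"
  shows "((lex_ideal n (hilbP d e) :: 'k::alg_closed_field mpoly set) = Lideal n a
          \<and> (Lideal n a :: 'k mpoly set) = gen_ideal n (mon ` gens_i n d a))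
       \<and> (\<forall>l. l + 1 \<le> d \<and> (\<forall>j\<le>l. a j = 0) \<and> a (l + 1) > 0 \<longrightarrow>
            mingens n (lex_ideal n (hilbP d e) :: 'k mpoly set) = gens_ii n d a l)
       \<and> (a 0 \<noteq> 0 \<longrightarrow> mingens n (lex_ideal n (hilbP d e) :: 'k mpoly set) = gens_i n d a)"
proof -
  have dn: "d < n" using n_gt by simp
  have azero: "\<forall>j. d < j \<and> j < n \<longrightarrow> a j = 0" using a_def by auto
  have LX: "(lex_ideal n (hilbP d e) :: 'k mpoly set) = MI n (Mset n d a)"
    by (rule lex_ideal_eq[OF dn a_def])
  have GI: "(gen_ideal n (mon ` gens_i n d a) :: 'k mpoly set) = MI n (Mset n d a)"
    unfolding Mset_def by (rule gen_ideal_MI) (use gens_i_in_vars(1)[OF dn] in blast)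
  have LI: "(Lideal n a :: 'k mpoly set) = gen_ideal n (mon ` gens_i n d a)"
    unfolding Lideal_def using Lgen_set[OF dn azero] by simp
  have MG: "mingens n (lex_ideal n (hilbP d e) :: 'k mpoly set)
       = {g \<in> gens_i n d a. \<forall>g'\<in>gens_i n d a. mdvd g' g \<longrightarrow> g' = g}"
    unfolding LX by (rule mingens_MI[OF dn])
  show ?thesis
    using LX GI LI MG minimal_ii[OF dn] minimal_all[OF dn] by simp
qed


end
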